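(* Let $r=3$ and $Q=\lfloor k^5/(2^{13}\cdot 10^{39})\rfloor$. For all sufficiently large $k$, in the random $3$-coloring of $[1,Q]$ described in the context, the probability that there exists a monochromatic ascending wave of length $\lfloor k/4\rfloor$ whose first difference is greater than $6b$ and whose last difference is smaller than $\frac{kb}{4\cdot 10^{14}}$ is less than $\frac12$.
   Context: Ascending wave: positive integers $w_1<\dots<w_n$ with $w_{i+1}-w_i\ge w_i-w_{i-1}$ for $2\le i\le n-1$; $AW(k;r)$ is the least $N$ such that every $r$-coloring of $\{1,\dots,N\}$ has a monochromatic $k$-term ascending wave. Let $r=3$, $K=\lfloor k/80\rfloor$ and $b=AW(K;2)-1$. For each $i\in\{0,1,2\}$ fix a coloring $\gamma_i$ of $\{1,\dots,b\}$ with the two colors $\{0,1,2\}\setminus\{i\}$ having no monochromatic $K$-term ascending wave. Let $A$ be the $9\times 6$ matrix with rows indexed by pairs $(j,i)$, $j\in\{0,1,2\}$, $i\in\{1,2,3\}$, whose row $(j,i)$ has entry $(m+j)\bmod 3$ in position $2m+1$ and entry $(i+m-1+j)\bmod 3$ in position $2m+2$, for $m=0,1,2$. Partition $[1,Q]$ into consecutive blocks of $b$ integers each (the last possibly partial), grouped into consecutive groups of $6$ blocks. For each group independently choose a row $(s_1,\dots,s_6)$ of $A$ uniformly at random and color the $l$-th block of the group by $\gamma_{s_l}$ (translated to that block). *)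

theory Defs
  imports "HOL-Probability.Probability"
begin

definition ascending_wave :: "nat \<Rightarrow> (nat \<Rightarrow> nat) \<Rightarrow> bool" where
  "ascending_wave n w \<longleftrightarrow>
     (\<forall>i<n. 0 < w i) \<and>
     (\<forall>i. i + 1 < n \<longrightarrow> w i < w (i + 1)) \<and>
     (\<forall>i. i + 2 < n \<longrightarrow> w (i + 1) - w i \<le> w (i + 2) - w (i + 1))"

definition mono_wave :: "(nat \<Rightarrow> nat) \<Rightarrow> nat \<Rightarrow> nat \<Rightarrow> (nat \<Rightarrow> nat) \<Rightarrow> bool" where
  "mono_wave c N n w \<longleftrightarrow> ascending_wave n w \<and>
     (\<forall>i<n. w i \<in> {1..N}) \<and> (\<forall>i<n. c (w i) = c (w 0))"

definition AW :: "nat \<Rightarrow> nat \<Rightarrow> nat" where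
  "AW k r = (LEAST N. \<forall>c. (\<forall>x\<in>{1..N}. c x < r) \<longrightarrow> (\<exists>w. mono_wave c N k w))"

text \<open>Entry of row (j,i) of the 9x6 matrix A at (0-based) position l, l < 6:
  position 2m+1 (l = 2m) has (m+j) mod 3, position 2m+2 (l = 2m+1) has (i+m-1+j) mod 3.\<close>
definition A_entry :: "nat \<Rightarrow> nat \<Rightarrow> nat \<Rightarrow> nat" where
  "A_entry j i l = (if even l then (l div 2 + j) mod 3 else (i + l div 2 - 1 + j) mod 3)"

definition A_rows :: "(nat \<times> nat) set" where
  "A_rows = {0,1,2} \<times> {1,2,3}"

text \<open>The block coloring of [1,Q] determined by a choice rho of a row per group:
  x lies in block (x-1) div b, which is block number ((x-1) div b) mod 6 (0-based)
  of group (x-1) div (6b); it is colored by gamma_{s_l} translated to that block.\<close>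
definition block_coloring ::
    "nat \<Rightarrow> (nat \<Rightarrow> nat \<Rightarrow> nat) \<Rightarrow> (nat \<Rightarrow> nat \<times> nat) \<Rightarrow> nat \<Rightarrow> nat" where
  "block_coloring b \<gamma> \<rho> x =
     (let g = (x - 1) div (6 * b); l = ((x - 1) div b) mod 6 in
      \<gamma> (A_entry (fst (\<rho> g)) (snd (\<rho> g)) l) ((x - 1) mod b + 1))"

definition num_groups :: "nat \<Rightarrow> nat \<Rightarrow> nat" where
  "num_groups Q b = (Q + 6 * b - 1) div (6 * b)"

definition row_choices :: "nat \<Rightarrow> (nat \<Rightarrow> nat \<times> nat) pmf" where
  "row_choices G = pmf_of_set (PiE {0..<G} (\<lambda>_. A_rows))"

end

theory Submission
  imports Defs "HOL-Real_Asymp.Real_Asymp"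
begin

definition Aval :: "nat \<times> nat \<Rightarrow> nat \<Rightarrow> nat" where "Aval r l = A_entry (fst r) (snd r) l"
lemma A_rows_eq: "A_rows = {(0,1),(0,2),(0,3),(1,1),(1,2),(1,3),(2,1),(2,2),(2,3)}"
  by (auto simp: A_rows_def)
lemma finite_A_rows: "finite A_rows" by (simp add: A_rows_eq)
lemma card_A_rows: "card A_rows = 9" by (simp add: A_rows_eq)
lemma three_le: "finite X \<Longrightarrow> {a,b,c} \<subseteq> X \<Longrightarrow> a \<noteq> b \<Longrightarrow> a \<noteq> c \<Longrightarrow> b \<noteq> c \<Longrightarrow> 3 \<le> card X"
  by (metis card_3_iff card_mono)
lemma col5: "c < 3 \<Longrightarrow> 3 \<le> card {r\<in>A_rows. Aval r 5 = c}"
proof -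
  assume "c < 3"
  then have "c = 0 \<or> c = 1 \<or> c = 2" by auto
  then show ?thesis
  proof (elim disjE)
    assume "c = 0" then show ?thesis
      by (intro three_le[of _ "(0,2)" "(1,1)" "(2,3)"]) (auto simp: A_rows_eq Aval_def A_entry_def)
  next
    assume "c = 1" then show ?thesis
      by (intro three_le[of _ "(0,3)" "(1,2)" "(2,1)"]) (auto simp: A_rows_eq Aval_def A_entry_def)
  next
    assume "c = 2" then show ?thesis
      by (intro three_le[of _ "(0,1)" "(1,3)" "(2,2)"]) (auto simp: A_rows_eq Aval_def A_entry_def)
  qed
qed
lemma col0: "c < 3 \<Longrightarrow> 3 \<le> card {r\<in>A_rows. Aval r 0 = c}"
  by (intro three_le[of _ "(c,1)" "(c,2)" "(c,3)"]) (auto simp: A_rows_eq Aval_def A_entry_def)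
lemma pair_ex: "c < 3 \<Longrightarrow> l < 5 \<Longrightarrow> \<exists>r\<in>A_rows. Aval r l = c \<and> Aval r (Suc l) = c"
  apply (simp add: A_rows_eq Aval_def A_entry_def)
  apply (cases c; cases "c - 1"; cases l; cases "l - 1"; cases "l - 2"; cases "l - 3"; simp)
  done
lemma Aval_lt: "Aval r l < 3" by (simp add: Aval_def A_entry_def)

lemma card_indep_split:
  fixes I H :: "nat set" and R :: "'r set"
  assumes fin: "finite I" "finite R" and HI: "H \<subseteq> I"
  and P: "\<And>\<rho> \<rho>'. (\<forall>x\<in>H. \<rho> x = \<rho>' x) \<Longrightarrow> P \<rho> = P \<rho>'"
  and Q: "\<And>\<rho> \<rho>'. (\<forall>x. x \<notin> H \<longrightarrow> \<rho> x = \<rho>' x) \<Longrightarrow> Q \<rho> = Q \<rho>'"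
  shows "card {\<rho>\<in>PiE I (\<lambda>_. R). P \<rho> \<and> Q \<rho>} * card (PiE I (\<lambda>_. R))
       = card {\<rho>\<in>PiE I (\<lambda>_. R). P \<rho>} * card {\<rho>\<in>PiE I (\<lambda>_. R). Q \<rho>}"
proof -
  define \<Omega> where "\<Omega> = PiE I (\<lambda>_. R)"
  define m where "m = (\<lambda>a b x. if x \<in> H then (a x :: 'r) else b x)"
  define \<phi> where "\<phi> = (\<lambda>(a,b). (m a b, m b a))"
  have inv: "\<phi> (\<phi> z) = z" for z
    by (cases z) (auto simp: \<phi>_def m_def fun_eq_iff)
  have mem: "m a b \<in> \<Omega>" if "a \<in> \<Omega>" "b \<in> \<Omega>" for a b
    using that HI by (auto simp: \<Omega>_def m_def PiE_def Pi_def extensional_def)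
  have Pm: "P (m a b) = P a" for a b by (rule P) (auto simp: m_def)
  have Qm: "Q (m a b) = Q b" for a b by (rule Q) (auto simp: m_def)
  have "bij_betw \<phi> ({\<rho>\<in>\<Omega>. P \<rho>} \<times> {\<rho>\<in>\<Omega>. Q \<rho>}) ({\<rho>\<in>\<Omega>. P \<rho> \<and> Q \<rho>} \<times> \<Omega>)"
  proof (rule bij_betw_byWitness[where f' = \<phi>])
    show "\<forall>a\<in>{\<rho> \<in> \<Omega>. P \<rho>} \<times> {\<rho> \<in> \<Omega>. Q \<rho>}. \<phi> (\<phi> a) = a" using inv by blast
    show "\<forall>a'\<in>{\<rho> \<in> \<Omega>. P \<rho> \<and> Q \<rho>} \<times> \<Omega>. \<phi> (\<phi> a') = a'" using inv by blast
    show "\<phi> ` ({\<rho> \<in> \<Omega>. P \<rho>} \<times> {\<rho> \<in> \<Omega>. Q \<rho>}) \<subseteq> {\<rho> \<in> \<Omega>. P \<rho> \<and> Q \<rho>} \<times> \<Omega>"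
    proof (rule image_subsetI)
      fix z assume "z \<in> {\<rho> \<in> \<Omega>. P \<rho>} \<times> {\<rho> \<in> \<Omega>. Q \<rho>}"
      then obtain a b where z: "z = (a,b)" "a \<in> \<Omega>" "P a" "b \<in> \<Omega>" "Q b" by blast
      have "m a b \<in> \<Omega>" "m b a \<in> \<Omega>" using mem z by blast+
      moreover have "P (m a b)" "Q (m a b)" using Pm Qm z by simp_all
      ultimately show "\<phi> z \<in> {\<rho> \<in> \<Omega>. P \<rho> \<and> Q \<rho>} \<times> \<Omega>" by (simp add: z \<phi>_def)
    qed
    show "\<phi> ` ({\<rho> \<in> \<Omega>. P \<rho> \<and> Q \<rho>} \<times> \<Omega>) \<subseteq> {\<rho> \<in> \<Omega>. P \<rho>} \<times> {\<rho> \<in> \<Omega>. Q \<rho>}"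
    proof (rule image_subsetI)
      fix z assume "z \<in> {\<rho> \<in> \<Omega>. P \<rho> \<and> Q \<rho>} \<times> \<Omega>"
      then obtain a b where z: "z = (a,b)" "a \<in> \<Omega>" "P a" "Q a" "b \<in> \<Omega>" by blast
      have "m a b \<in> \<Omega>" "m b a \<in> \<Omega>" using mem z by blast+
      moreover have "P (m a b)" "Q (m b a)" using Pm Qm z by simp_all
      ultimately show "\<phi> z \<in> {\<rho> \<in> \<Omega>. P \<rho>} \<times> {\<rho> \<in> \<Omega>. Q \<rho>}" by (simp add: z \<phi>_def)
    qed
  qed
  then have "card ({\<rho>\<in>\<Omega>. P \<rho>} \<times> {\<rho>\<in>\<Omega>. Q \<rho>}) = card ({\<rho>\<in>\<Omega>. P \<rho> \<and> Q \<rho>} \<times> \<Omega>)"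
    by (rule bij_betw_same_card)
  then show ?thesis unfolding \<Omega>_def by (simp add: card_cartesian_product)
qed

lemma card_tests:
  fixes I :: "nat set" and R :: "'r set" and J :: "'j set"
  assumes fin: "finite I" "finite R" and finJ: "finite J"
  and HI: "\<And>j. j\<in>J \<Longrightarrow> H j \<subseteq> I"
  and disj: "\<And>i j. i\<in>J \<Longrightarrow> j\<in>J \<Longrightarrow> i\<noteq>j \<Longrightarrow> H i \<inter> H j = {}"
  and dep: "\<And>j \<rho> \<rho>'. j\<in>J \<Longrightarrow> (\<forall>x\<in>H j. \<rho> x = \<rho>' x) \<Longrightarrow> T j \<rho> = T j \<rho>'"
  and bnd: "\<And>j. j\<in>J \<Longrightarrow> real (card {\<rho>\<in>PiE I (\<lambda>_. R). T j \<rho>}) \<le> q * real (card (PiE I (\<lambda>_. R)))"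
  and q: "q \<ge> 0"
  shows "real (card {\<rho>\<in>PiE I (\<lambda>_. R). \<forall>j\<in>J. T j \<rho>}) \<le> q ^ card J * real (card (PiE I (\<lambda>_. R)))"
  using finJ HI disj dep bnd
proof (induction J rule: finite_induct)
  case empty
  then show ?case by simp
next
  case (insert j J)
  define N where "N = card (PiE I (\<lambda>_. R))"
  have IH: "real (card {\<rho>\<in>PiE I (\<lambda>_. R). \<forall>j\<in>J. T j \<rho>}) \<le> q ^ card J * real N"
    unfolding N_def
  proof (rule insert.IH)
    show "\<And>j. j \<in> J \<Longrightarrow> H j \<subseteq> I" using insert.prems(1) by blast
    show "\<And>i j. i \<in> J \<Longrightarrow> j \<in> J \<Longrightarrow> i \<noteq> j \<Longrightarrow> H i \<inter> H j = {}" using insert.prems(2) by blast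
    show "\<And>j \<rho> \<rho>'. j \<in> J \<Longrightarrow> \<forall>x\<in>H j. \<rho> x = \<rho>' x \<Longrightarrow> T j \<rho> = T j \<rho>'" using insert.prems(3) by blast
    show "\<And>j. j \<in> J \<Longrightarrow> real (card {\<rho> \<in> I \<rightarrow>\<^sub>E R. T j \<rho>}) \<le> q * real (card (I \<rightarrow>\<^sub>E R))" using insert.prems(4) by blast
  qed
  have split: "card {\<rho>\<in>PiE I (\<lambda>_. R). T j \<rho> \<and> (\<forall>j\<in>J. T j \<rho>)} * N
       = card {\<rho>\<in>PiE I (\<lambda>_. R). T j \<rho>} * card {\<rho>\<in>PiE I (\<lambda>_. R). \<forall>j\<in>J. T j \<rho>}"
    unfolding N_def
  proof (rule card_indep_split[OF fin])
    show "H j \<subseteq> I" using insert.prems(1) by blast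
    show "T j \<rho> = T j \<rho>'" if "\<forall>x\<in>H j. \<rho> x = \<rho>' x" for \<rho> \<rho>'
      using insert.prems(3)[of j] that by blast
    show "(\<forall>j\<in>J. T j \<rho>) = (\<forall>j\<in>J. T j \<rho>')" if "\<forall>x. x \<notin> H j \<longrightarrow> \<rho> x = \<rho>' x" for \<rho> \<rho>'
    proof -
      have "T i \<rho> = T i \<rho>'" if "i \<in> J" for i
      proof (rule insert.prems(3))
        show "i \<in> insert j J" using that by blast
        have "i \<noteq> j" using that insert.hyps by blast
        then have "H i \<inter> H j = {}" using insert.prems(2)[of i j] that by blast
        then show "\<forall>x\<in>H i. \<rho> x = \<rho>' x" using \<open>\<forall>x. x \<notin> H j \<longrightarrow> \<rho> x = \<rho>' x\<close> by auto
      qed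
      then show ?thesis by blast
    qed
  qed
  have bj: "real (card {\<rho>\<in>PiE I (\<lambda>_. R). T j \<rho>}) \<le> q * real N"
    unfolding N_def using insert.prems(4) by blast
  have eq: "{\<rho>\<in>PiE I (\<lambda>_. R). \<forall>i\<in>insert j J. T i \<rho>} = {\<rho>\<in>PiE I (\<lambda>_. R). T j \<rho> \<and> (\<forall>j\<in>J. T j \<rho>)}"
    by auto
  show ?case
  proof (cases "N = 0")
    case True
    have "finite (PiE I (\<lambda>_. R))" using fin by (simp add: finite_PiE)
    then have "PiE I (\<lambda>_. R) = {}" using True N_def by simp
    then show ?thesis by simp
  next
    case False
    have "real (card {\<rho>\<in>PiE I (\<lambda>_. R). T j \<rho> \<and> (\<forall>j\<in>J. T j \<rho>)}) * real N
        = real (card {\<rho>\<in>PiE I (\<lambda>_. R). T j \<rho>}) * real (card {\<rho>\<in>PiE I (\<lambda>_. R). \<forall>j\<in>J. T j \<rho>})"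
      unfolding of_nat_mult[symmetric] using split by (simp only:)
    also have "\<dots> \<le> (q * real N) * (q ^ card J * real N)"
      by (intro mult_mono bj IH) (use q in auto)
    also have "\<dots> = (q ^ Suc (card J) * real N) * real N" by (simp add: algebra_simps)
    finally have "real (card {\<rho>\<in>PiE I (\<lambda>_. R). T j \<rho> \<and> (\<forall>j\<in>J. T j \<rho>)}) \<le> q ^ Suc (card J) * real N"
      using False by (simp only: mult_le_cancel_right)
    then show ?thesis using insert.hyps eq N_def by simp
  qed
qed

lemma card_Omega: "card (PiE {0..<G} (\<lambda>_. A_rows)) = 9 ^ G"
  by (simp add: card_PiE card_A_rows)

lemma test_bound:
  assumes G1: "\<beta> div 6 < G" and G2: "Suc \<beta> div 6 < G" and c: "c < 3"
  shows "real (card {\<rho>\<in>PiE {0..<G} (\<lambda>_. A_rows). \<not>(Aval (\<rho> (\<beta> div 6)) (\<beta> mod 6) = c \<and> Aval (\<rho> (Suc \<beta> div 6)) (Suc \<beta> mod 6) = c)})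
     \<le> 8/9 * real (card (PiE {0..<G} (\<lambda>_. A_rows)))"
proof -
  define \<Omega> where "\<Omega> = PiE {0..<G} (\<lambda>_. A_rows)"
  define bad where "bad = (\<lambda>\<rho>::nat\<Rightarrow>nat\<times>nat. Aval (\<rho> (\<beta> div 6)) (\<beta> mod 6) = c \<and> Aval (\<rho> (Suc \<beta> div 6)) (Suc \<beta> mod 6) = c)"
  have finO: "finite \<Omega>" unfolding \<Omega>_def by (simp add: finite_PiE finite_A_rows)
  have N: "card \<Omega> = 9 ^ G" unfolding \<Omega>_def by (rule card_Omega)
  define g where "g = \<beta> div 6"
  have big: "9 ^ G \<le> 9 * card {\<rho>\<in>\<Omega>. bad \<rho>}"
  proof (cases "\<beta> mod 6 < 5")
    case True
    have g2: "Suc \<beta> div 6 = g" "Suc \<beta> mod 6 = Suc (\<beta> mod 6)" using True unfolding g_def by presburger+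
    define S where "S = {r\<in>A_rows. Aval r (\<beta> mod 6) = c \<and> Aval r (Suc (\<beta> mod 6)) = c}"
    have "S \<noteq> {}" using pair_ex[OF c True] unfolding S_def by blast
    moreover have "finite S" unfolding S_def using finite_A_rows by simp
    ultimately have cS: "1 \<le> card S" by (simp add: Suc_leI card_gt_0_iff)
    define F where "F = (\<lambda>x. if x = g then S else A_rows)"
    have gI: "g \<in> {0..<G}" using G1 g_def by simp
    have sub: "PiE {0..<G} F \<subseteq> {\<rho>\<in>\<Omega>. bad \<rho>}"
    proof
      fix \<rho> assume h: "\<rho> \<in> PiE {0..<G} F"
      have "\<rho> \<in> \<Omega>" unfolding \<Omega>_def using h by (rule rev_subsetD[OF _ PiE_mono]) (auto simp: F_def S_def)
      moreover have "\<rho> g \<in> S" using PiE_mem[OF h gI] by (simp add: F_def)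
      ultimately show "\<rho> \<in> {\<rho>\<in>\<Omega>. bad \<rho>}" by (simp add: S_def bad_def g2 g_def[symmetric])
    qed
    have "card (PiE {0..<G} F) = (\<Prod>x\<in>{0..<G}. card (F x))" by (simp add: card_PiE)
    also have "\<dots> = card (F g) * (\<Prod>x\<in>{0..<G}-{g}. card (F x))" using gI by (simp add: prod.remove)
    also have "(\<Prod>x\<in>{0..<G}-{g}. card (F x)) = (\<Prod>x\<in>{0..<G}-{g}. 9)"
      by (rule prod.cong) (auto simp: F_def card_A_rows)
    also have "\<dots> = 9 ^ (G - 1)" using gI by simp
    finally have cF: "card (PiE {0..<G} F) = card S * 9 ^ (G - 1)" by (simp add: F_def)
    have "(9::nat) ^ G = 9 * 9 ^ (G - 1)" using gI by (cases G) auto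
    also have "\<dots> \<le> 9 * card (PiE {0..<G} F)" using cF cS by simp
    also have "\<dots> \<le> 9 * card {\<rho>\<in>\<Omega>. bad \<rho>}" using card_mono[OF _ sub] finO by simp
    finally show ?thesis .
  next
    case False
    have g2: "Suc \<beta> div 6 = Suc g" "Suc \<beta> mod 6 = 0" "\<beta> mod 6 = 5" using False unfolding g_def by presburger+
    define S1 where "S1 = {r\<in>A_rows. Aval r 5 = c}"
    define S2 where "S2 = {r\<in>A_rows. Aval r 0 = c}"
    have c1: "3 \<le> card S1" unfolding S1_def by (rule col5[OF c])
    have c2: "3 \<le> card S2" unfolding S2_def by (rule col0[OF c])
    define F where "F = (\<lambda>x. if x = g then S1 else if x = Suc g then S2 else A_rows)"
    have gI: "g \<in> {0..<G}" using G1 g_def by simp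
    have gI2: "Suc g \<in> {0..<G}-{g}" using G2 g2 by simp
    have sub: "PiE {0..<G} F \<subseteq> {\<rho>\<in>\<Omega>. bad \<rho>}"
    proof
      fix \<rho> assume h: "\<rho> \<in> PiE {0..<G} F"
      have "\<rho> \<in> \<Omega>" unfolding \<Omega>_def using h by (rule rev_subsetD[OF _ PiE_mono]) (auto simp: F_def S1_def S2_def)
      moreover have "\<rho> g \<in> S1" using PiE_mem[OF h gI] by (simp add: F_def)
      moreover have "\<rho> (Suc g) \<in> F (Suc g)" using PiE_mem[OF h] gI2 by simp
      then have "\<rho> (Suc g) \<in> S2" by (simp add: F_def)
      ultimately show "\<rho> \<in> {\<rho>\<in>\<Omega>. bad \<rho>}" by (simp add: S1_def S2_def bad_def g2 g_def[symmetric])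
    qed
    have "card (PiE {0..<G} F) = (\<Prod>x\<in>{0..<G}. card (F x))" by (simp add: card_PiE)
    also have "\<dots> = card (F g) * (\<Prod>x\<in>{0..<G}-{g}. card (F x))" using gI by (simp add: prod.remove)
    also have "(\<Prod>x\<in>{0..<G}-{g}. card (F x)) = card (F (Suc g)) * (\<Prod>x\<in>{0..<G}-{g}-{Suc g}. card (F x))"
      using gI2 by (intro prod.remove) auto
    also have "(\<Prod>x\<in>{0..<G}-{g}-{Suc g}. card (F x)) = (\<Prod>x\<in>{0..<G}-{g}-{Suc g}. 9)"
      by (rule prod.cong) (auto simp: F_def card_A_rows)
    also have "\<dots> = 9 ^ (G - 2)" using gI gI2 by (simp add: card_Diff_singleton)
    finally have cF: "card (PiE {0..<G} F) = card S1 * (card S2 * 9 ^ (G - 2))" by (simp add: F_def)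
    have "(9::nat) ^ G = 81 * 9 ^ (G - 2)" using gI2 by (cases G; cases "G - 1") auto
    also have "\<dots> \<le> 9 * (card S1 * (card S2 * 9 ^ (G - 2)))"
    proof -
      have "9 \<le> card S1 * card S2" using c1 c2 mult_le_mono[OF c1 c2] by simp
      then show ?thesis by simp
    qed
    also have "\<dots> \<le> 9 * card {\<rho>\<in>\<Omega>. bad \<rho>}" using card_mono[OF _ sub] finO cF by simp
    finally show ?thesis .
  qed
  have "{\<rho>\<in>\<Omega>. \<not> bad \<rho>} = \<Omega> - {\<rho>\<in>\<Omega>. bad \<rho>}" by blast
  then have "card {\<rho>\<in>\<Omega>. \<not> bad \<rho>} = card \<Omega> - card {\<rho>\<in>\<Omega>. bad \<rho>}"
    using finO by (simp add: card_Diff_subset)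
  moreover have "card {\<rho>\<in>\<Omega>. bad \<rho>} \<le> card \<Omega>" using finO by (simp add: card_mono)
  ultimately have "real (card {\<rho>\<in>\<Omega>. \<not> bad \<rho>}) = real (card \<Omega>) - real (card {\<rho>\<in>\<Omega>. bad \<rho>})"
    by simp
  also have "\<dots> \<le> 8/9 * real (card \<Omega>)"
  proof -
    have "real (9 ^ G) \<le> real (9 * card {\<rho>\<in>\<Omega>. bad \<rho>})" using big by (simp only: of_nat_le_iff)
    then show ?thesis using N by simp
  qed
  finally show ?thesis unfolding \<Omega>_def bad_def .
qed

lemma geom_rev: "(\<Sum>a\<le>S. (2::nat) ^ (S - a)) < 2 ^ Suc S"
proof (induction S)
  case 0 then show ?case by simp
next
  case (Suc S)
  have "(\<Sum>a\<le>Suc S. (2::nat) ^ (Suc S - a)) = (\<Sum>a\<le>S. 2 ^ (Suc S - a)) + 1" by simp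
  also have "(\<Sum>a\<le>S. (2::nat) ^ (Suc S - a)) = (\<Sum>a\<le>S. 2 * 2 ^ (S - a))"
    by (rule sum.cong) (auto simp: Suc_diff_le)
  also have "\<dots> = 2 * (\<Sum>a\<le>S. 2 ^ (S - a))" by (simp add: sum_distrib_left)
  finally show ?case using Suc.IH by simp
qed

lemma lists_sum_finite: "finite {xs::nat list. length xs = W \<and> sum_list xs \<le> S}"
proof (rule finite_subset)
  show "{xs::nat list. length xs = W \<and> sum_list xs \<le> S} \<subseteq> {xs. set xs \<subseteq> {0..S} \<and> length xs = W}"
    using member_le_sum_list by fastforce
  show "finite {xs. set xs \<subseteq> {0..S} \<and> length xs = W}" by (rule finite_lists_length_eq) simp
qed

lemma card_lists_sum: "card {xs::nat list. length xs = W \<and> sum_list xs \<le> S} \<le> 2 ^ (W + S)"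
proof (induction W arbitrary: S)
  case 0
  have "{xs::nat list. length xs = 0 \<and> sum_list xs \<le> S} = {[]}" by auto
  then show ?case by simp
next
  case (Suc W)
  have eq: "{xs::nat list. length xs = Suc W \<and> sum_list xs \<le> S}
      = (\<Union>a\<in>{..S}. (Cons a) ` {xs. length xs = W \<and> sum_list xs \<le> S - a})"
  proof (rule set_eqI, rule iffI)
    fix xs assume "xs \<in> {xs::nat list. length xs = Suc W \<and> sum_list xs \<le> S}"
    then obtain a ys where "xs = a # ys" "length ys = W" "a + sum_list ys \<le> S"
      by (cases xs) auto
    then have "a \<in> {..S}" "xs \<in> (Cons a) ` {xs. length xs = W \<and> sum_list xs \<le> S - a}" by auto
    then show "xs \<in> (\<Union>a\<in>{..S}. (Cons a) ` {xs. length xs = W \<and> sum_list xs \<le> S - a})" by blast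
  qed auto
  have "card {xs::nat list. length xs = Suc W \<and> sum_list xs \<le> S}
      \<le> (\<Sum>a\<le>S. card ((Cons a) ` {xs. length xs = W \<and> sum_list xs \<le> S - a}))"
    unfolding eq by (rule card_UN_le) simp
  also have "\<dots> \<le> (\<Sum>a\<le>S. 2 ^ (W + (S - a)))"
    by (rule sum_mono) (rule order_trans[OF card_image_le[OF lists_sum_finite] Suc.IH])
  also have "\<dots> = (\<Sum>a\<le>S. 2 ^ W * 2 ^ (S - a))" by (rule sum.cong) (simp_all add: power_add[symmetric])
  also have "\<dots> = 2 ^ W * (\<Sum>a\<le>S. 2 ^ (S - a))" by (simp add: sum_distrib_left)
  also have "\<dots> \<le> 2 ^ W * 2 ^ Suc S" using geom_rev[of S] by simp
  finally show ?case by (simp add: power_add)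
qed

definition dd :: "(nat \<Rightarrow> nat) \<Rightarrow> nat \<Rightarrow> nat" where "dd w i = w (Suc i) - w i"
definition ee :: "nat \<Rightarrow> nat \<Rightarrow> (nat \<Rightarrow> nat) \<Rightarrow> nat \<Rightarrow> nat" where "ee b n w i = (3 * n * dd w i) div b"
definition pp :: "nat \<Rightarrow> nat \<Rightarrow> (nat \<Rightarrow> nat) \<Rightarrow> nat \<Rightarrow> nat" where "pp b n w s = (3 * (w (s * n) - 1)) div b"
definition EE :: "nat \<Rightarrow> nat \<Rightarrow> (nat \<Rightarrow> nat) \<Rightarrow> nat \<Rightarrow> nat" where "EE b n w s = ee b n w (s * n)"

lemma mul_div_le: "b * (x div b) \<le> (x::nat)"
  using div_times_less_eq_dividend[of x b] by (simp add: mult.commute)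

lemma lt_mul_div: "0 < b \<Longrightarrow> (x::nat) < b * (x div b + 1)"
proof -
  assume b: "0 < b"
  have e: "b * (x div b) + x mod b = x" by (rule mult_div_mod_eq)
  have "x mod b < b" using b by simp
  then have "x < b * (x div b) + b" using e by linarith
  then show ?thesis by (simp add: distrib_left)
qed

locale wv =
  fixes b n L :: nat and w :: "nat \<Rightarrow> nat"
  assumes b_pos: "0 < b" and n_pos: "0 < n"
  and asc: "\<And>i. i + 1 < L \<Longrightarrow> w i < w (i + 1)"
  and conv: "\<And>i. i + 2 < L \<Longrightarrow> w (i + 1) - w i \<le> w (i + 2) - w (i + 1)"
  and pos: "\<And>i. i < L \<Longrightarrow> 1 \<le> w i"
  and first: "6 * b < w 1 - w 0"
begin

lemma d_mono: "i \<le> j \<Longrightarrow> j + 2 \<le> L \<Longrightarrow> dd w i \<le> dd w j"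
proof (induction j)
  case 0 then show ?case by simp
next
  case (Suc j)
  show ?case
  proof (cases "i = Suc j")
    case True then show ?thesis by simp
  next
    case False
    then have "dd w i \<le> dd w j" using Suc by simp
    also have "dd w j \<le> dd w (Suc j)" using conv[of j] Suc.prems by (simp add: dd_def)
    finally show ?thesis .
  qed
qed

lemma w_sum: "i + j < L \<Longrightarrow> w (i + j) = w i + (\<Sum>t<j. dd w (i + t))"
proof (induction j)
  case 0 then show ?case by simp
next
  case (Suc j)
  have "w (i + j) < w (i + j + 1)" using asc[of "i + j"] Suc.prems by simp
  then show ?case using Suc by (simp add: dd_def)
qed

lemma d_gt: "i + 2 \<le> L \<Longrightarrow> 6 * b < dd w i"
  using d_mono[of 0 i] first by (simp add: dd_def)

lemma e_mono: "i \<le> j \<Longrightarrow> j + 2 \<le> L \<Longrightarrow> ee b n w i \<le> ee b n w j"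
  unfolding ee_def by (intro div_le_mono mult_le_mono2 d_mono)

lemma E_mono: "s \<le> s' \<Longrightarrow> s' * n + 2 \<le> L \<Longrightarrow> EE b n w s \<le> EE b n w s'"
  unfolding EE_def by (intro e_mono) auto

lemma e_bounds: "b * ee b n w i \<le> 3 * n * dd w i" "3 * n * dd w i < b * (ee b n w i + 1)"
proof -
  show "b * ee b n w i \<le> 3 * n * dd w i" unfolding ee_def by (rule mul_div_le)
  show "3 * n * dd w i < b * (ee b n w i + 1)" unfolding ee_def by (rule lt_mul_div[OF b_pos])
qed

lemma p_bounds: "b * pp b n w s \<le> 3 * (w (s * n) - 1)" "3 * (w (s * n) - 1) < b * (pp b n w s + 1)"
proof -
  show "b * pp b n w s \<le> 3 * (w (s * n) - 1)" unfolding pp_def by (rule mul_div_le)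
  show "3 * (w (s * n) - 1) < b * (pp b n w s + 1)" unfolding pp_def by (rule lt_mul_div[OF b_pos])
qed

lemma block_pred:
  assumes flat: "EE b n w s = EE b n w (Suc s)" and j: "j < n" and SL: "Suc s * n + 2 \<le> L"
  shows "(w (s*n + j) - 1) div b = (n * pp b n w s + j * EE b n w s) div (3*n)
       \<or> (w (s*n + j) - 1) div b = (n * pp b n w s + j * EE b n w s) div (3*n) + 1"
proof -
  define a where "a = s * n"
  define E where "E = EE b n w s"
  define p where "p = pp b n w s"
  define x0 where "x0 = w a - 1"
  define X where "X = w (a + j) - 1"
  define S where "S = (\<Sum>t<j. dd w (a + t))"
  define Y where "Y = n * p + j * E"
  define \<beta> where "\<beta> = Y div (3 * n)"
  have Sn: "Suc s * n = a + n" by (simp add: a_def)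
  have aj: "a + j < L" using SL j Sn by simp
  have wa: "1 \<le> w a" using pos[of a] aj by simp
  have XS: "X = x0 + S" using w_sum[OF aj] wa by (simp add: X_def x0_def S_def)
  have eq: "ee b n w (a + t) = E" if "t < j" for t
  proof (rule antisym)
    have "ee b n w (a + t) \<le> ee b n w (Suc s * n)" using that j SL Sn by (intro e_mono) auto
    then show "ee b n w (a + t) \<le> E" using flat by (simp add: E_def EE_def)
    show "E \<le> ee b n w (a + t)" unfolding E_def EE_def a_def using that j SL Sn a_def by (intro e_mono) auto
  qed
  have lowS: "j * (b * E) \<le> 3 * n * S"
  proof -
    have "j * (b * E) = (\<Sum>t<j. b * ee b n w (a + t))" using eq by simp
    also have "\<dots> \<le> (\<Sum>t<j. 3 * n * dd w (a + t))" by (intro sum_mono e_bounds(1))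
    also have "\<dots> = 3 * n * S" by (simp add: S_def sum_distrib_left)
    finally show ?thesis .
  qed
  have upS: "3 * n * S \<le> j * (b * (E + 1))"
  proof -
    have "3 * n * S = (\<Sum>t<j. 3 * n * dd w (a + t))" by (simp add: S_def sum_distrib_left)
    also have "\<dots> \<le> (\<Sum>t<j. b * (ee b n w (a + t) + 1))" by (intro sum_mono less_imp_le e_bounds(2))
    also have "\<dots> = j * (b * (E + 1))" using eq by simp
    finally show ?thesis .
  qed
  have p1: "b * p \<le> 3 * x0" "3 * x0 < b * (p + 1)"
    using p_bounds[of s] by (simp_all add: p_def x0_def a_def)
  have low: "b * Y \<le> 3 * n * X"
  proof -
    have "b * Y = n * (b * p) + j * (b * E)" by (simp add: Y_def algebra_simps)
    also have "\<dots> \<le> n * (3 * x0) + 3 * n * S" using p1(1) lowS by (intro add_mono) auto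
    also have "\<dots> = 3 * n * X" by (simp add: XS algebra_simps)
    finally show ?thesis .
  qed
  have up: "3 * n * X < b * Y + b * (2 * n)"
  proof -
    have "3 * n * X = n * (3 * x0) + 3 * n * S" by (simp add: XS algebra_simps)
    also have "\<dots> < n * (b * (p + 1)) + j * (b * (E + 1))"
      using p1(2) upS n_pos by (intro add_less_le_mono) auto
    also have "\<dots> = b * Y + b * (n + j)" by (simp add: Y_def algebra_simps)
    also have "\<dots> \<le> b * Y + b * (2 * n)" using j by simp
    finally show ?thesis .
  qed
  have n3: "0 < 3 * n" using n_pos by simp
  have bY1: "3 * n * \<beta> \<le> Y" unfolding \<beta>_def by (rule mul_div_le)
  have bY2: "Y < 3 * n * (\<beta> + 1)" unfolding \<beta>_def by (rule lt_mul_div[OF n3])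
  have "3 * n * (b * \<beta>) \<le> 3 * n * X"
  proof -
    have "3 * n * (b * \<beta>) = b * (3 * n * \<beta>)" by (simp add: algebra_simps)
    also have "\<dots> \<le> b * Y" using bY1 by (rule mult_left_mono) simp
    also have "\<dots> \<le> 3 * n * X" by (rule low)
    finally show ?thesis .
  qed
  then have L1: "b * \<beta> \<le> X" using n3 by simp
  have "Y + 1 \<le> 3 * n * (\<beta> + 1)" using bY2 by simp
  then have "b * (Y + 1) \<le> b * (3 * n * (\<beta> + 1))" by (rule mult_left_mono) simp
  then have "3 * n * X < b * (3 * n * (\<beta> + 1)) + b * (2 * n)" using up by (simp add: algebra_simps)
  also have "\<dots> \<le> 3 * n * (b * (\<beta> + 2))" by (simp add: algebra_simps)
  finally have L2: "X < b * (\<beta> + 2)" using n3 by simp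
  have g1: "\<beta> \<le> X div b"
  proof -
    have "b * \<beta> div b \<le> X div b" using L1 by (rule div_le_mono)
    then show ?thesis using b_pos by simp
  qed
  have g2: "X div b < \<beta> + 2" using L2 b_pos by (simp add: div_less_iff_less_mult mult.commute)
  show ?thesis using g1 g2 unfolding X_def \<beta>_def Y_def E_def p_def a_def by linarith
qed

lemma anchor:
  assumes SL: "Suc s * n + 2 \<le> L"
  shows "pp b n w s + EE b n w s \<le> pp b n w (Suc s)"
    and "pp b n w (Suc s) \<le> pp b n w s + EE b n w (Suc s) + 1"
proof -
  define a where "a = s * n"
  define E where "E = EE b n w s"
  define E' where "E' = EE b n w (Suc s)"
  define p where "p = pp b n w s"
  define p' where "p' = pp b n w (Suc s)"
  define x0 where "x0 = w a - 1"
  define X where "X = w (a + n) - 1"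
  define S where "S = (\<Sum>t<n. dd w (a + t))"
  have Sn: "Suc s * n = a + n" by (simp add: a_def)
  have aj: "a + n < L" using SL Sn by simp
  have wa: "1 \<le> w a" using pos[of a] aj by simp
  have XS: "X = x0 + S" using w_sum[OF aj] wa by (simp add: X_def x0_def S_def)
  have eb: "E \<le> ee b n w (a + t) \<and> ee b n w (a + t) \<le> E'" if "t < n" for t
  proof
    show "ee b n w (a + t) \<le> E'" unfolding E'_def EE_def using that SL Sn by (intro e_mono) auto
    show "E \<le> ee b n w (a + t)" unfolding E_def EE_def a_def using that SL Sn a_def by (intro e_mono) auto
  qed
  have lowS: "n * (b * E) \<le> 3 * n * S"
  proof -
    have "n * (b * E) = (\<Sum>t<n. b * E)" by simp
    also have "\<dots> \<le> (\<Sum>t<n. b * ee b n w (a + t))" using eb by (intro sum_mono) simp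
    also have "\<dots> \<le> (\<Sum>t<n. 3 * n * dd w (a + t))" by (intro sum_mono e_bounds(1))
    also have "\<dots> = 3 * n * S" by (simp add: S_def sum_distrib_left)
    finally show ?thesis .
  qed
  have upS: "3 * n * S \<le> n * (b * (E' + 1))"
  proof -
    have "3 * n * S = (\<Sum>t<n. 3 * n * dd w (a + t))" by (simp add: S_def sum_distrib_left)
    also have "\<dots> \<le> (\<Sum>t<n. b * (ee b n w (a + t) + 1))" by (intro sum_mono less_imp_le e_bounds(2))
    also have "\<dots> \<le> (\<Sum>t<n. b * (E' + 1))" using eb by (intro sum_mono) simp
    also have "\<dots> = n * (b * (E' + 1))" by simp
    finally show ?thesis .
  qed
  have p1: "b * p \<le> 3 * x0" "3 * x0 < b * (p + 1)"
    using p_bounds[of s] by (simp_all add: p_def x0_def a_def)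
  have p2: "b * p' \<le> 3 * X" "3 * X < b * (p' + 1)"
    using p_bounds[of "Suc s", unfolded Sn] by (simp_all add: p'_def X_def Sn)
  have "n * (b * (p + E)) \<le> n * (3 * X)"
  proof -
    have "n * (b * (p + E)) = n * (b * p) + n * (b * E)" by (simp add: algebra_simps)
    also have "\<dots> \<le> n * (3 * x0) + 3 * n * S" using p1(1) lowS by (intro add_mono) auto
    also have "\<dots> = n * (3 * X)" by (simp add: XS algebra_simps)
    finally show ?thesis .
  qed
  then have "b * (p + E) \<le> 3 * X" using n_pos by simp
  then have "b * (p + E) < b * (p' + 1)" using p2(2) by linarith
  then have "p + E < p' + 1" using mult_less_cancel1 by blast
  then show "pp b n w s + EE b n w s \<le> pp b n w (Suc s)" by (simp add: p_def E_def p'_def)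
  have "n * (3 * X) < n * (b * (p + E' + 2))"
  proof -
    have "n * (3 * X) = n * (3 * x0) + 3 * n * S" by (simp add: XS algebra_simps)
    also have "\<dots> < n * (b * (p + 1)) + n * (b * (E' + 1))"
      using p1(2) upS n_pos by (intro add_less_le_mono) auto
    also have "\<dots> = n * (b * (p + E' + 2))" by (simp add: algebra_simps)
    finally show ?thesis .
  qed
  then have "3 * X < b * (p + E' + 2)" using n_pos by simp
  then have "b * p' < b * (p + E' + 2)" using p2(1) by linarith
  then have "p' < p + E' + 2" using mult_less_cancel1 by blast
  then show "pp b n w (Suc s) \<le> pp b n w s + EE b n w (Suc s) + 1" by (simp add: p_def E'_def p'_def)
qed

lemma block_sep: assumes "i + 2 \<le> i'" "i' < L" shows "(w i - 1) div b + 12 \<le> (w i' - 1) div b"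
proof -
  have "i + 1 + 2 \<le> L" "i + 2 \<le> L" using assms by auto
  then have d1: "6 * b < dd w i" "6 * b < dd w (i + 1)" using d_gt by auto
  have "w (i + 2) = w i + (\<Sum>t<2. dd w (i + t))" using w_sum[of i 2] assms by simp
  then have "w (i + 2) = w i + dd w i + dd w (i + 1)" by (simp add: numeral_2_eq_2)
  then have "w i + 12 * b \<le> w (i + 2)" using d1 by linarith
  moreover have "w (i + 2) \<le> w i'"
  proof -
    obtain m where m: "i' = i + 2 + m" using assms(1) le_Suc_ex by blast
    have "w (i + 2 + m) = w (i + 2) + (\<Sum>t<m. dd w (i + 2 + t))"
      using w_sum[of "i + 2" m] assms m by blast
    then show ?thesis using m by simp
  qed
  ultimately have "w i - 1 + 12 * b \<le> w i' - 1" using pos[of i] assms by linarith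
  then have "(w i - 1 + 12 * b) div b \<le> (w i' - 1) div b" by (rule div_le_mono)
  moreover have "(w i - 1 + 12 * b) div b = (w i - 1) div b + 12" using b_pos by simp
  ultimately show ?thesis by simp
qed

lemma block_next: assumes "i + 1 < L" shows "(w i - 1) div b + 1 \<le> (w (i + 1) - 1) div b"
proof -
  have "w i + b \<le> w (i + 1)"
  proof (cases "i + 2 \<le> L")
    case True
    then have "6 * b < dd w i" by (rule d_gt)
    then show ?thesis by (simp add: dd_def)
  next
    case False
    then show ?thesis using assms by simp
  qed
  then have "w i - 1 + b \<le> w (i + 1) - 1" using pos[of i] assms by linarith
  then have "(w i - 1 + b) div b \<le> (w (i+1) - 1) div b" by (rule div_le_mono)
  moreover have "(w i - 1 + b) div b = (w i - 1) div b + 1" using b_pos div_add_self2[of b "w i - 1"] by simp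
  ultimately show ?thesis by simp
qed

end

lemma color_avoid:
  assumes b: "0 < b" and hyp: "\<forall>i<3. \<forall>x\<in>{1..b}. \<gamma> i x \<in> {0,1,2} - {i}"
  shows "Aval (\<rho> ((x - 1) div b div 6)) ((x - 1) div b mod 6) \<noteq> block_coloring b \<gamma> \<rho> x"
    and "block_coloring b \<gamma> \<rho> x < 3"
proof -
  define s where "s = Aval (\<rho> ((x - 1) div b div 6)) ((x - 1) div b mod 6)"
  define t where "t = (x - 1) mod b + 1"
  have g: "(x - 1) div (6 * b) = (x - 1) div b div 6" by (simp add: div_mult2_eq mult.commute)
  have bc: "block_coloring b \<gamma> \<rho> x = \<gamma> s t"
    unfolding block_coloring_def Let_def s_def t_def g Aval_def by simp
  have s3: "s < 3" unfolding s_def by (rule Aval_lt)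
  have t: "t \<in> {1..b}" using b unfolding t_def by (simp add: Suc_leI)
  have "\<gamma> s t \<in> {0,1,2} - {s}" using hyp s3 t by blast
  then show "s \<noteq> block_coloring b \<gamma> \<rho> x" "block_coloring b \<gamma> \<rho> x < 3" using bc by auto
qed

definition Jz :: "nat \<Rightarrow> nat \<Rightarrow> nat list \<Rightarrow> (nat \<times> nat) set" where
  "Jz n W El = {(s,j). s < W \<and> El!s = El!(Suc s) \<and> j < n \<and> even j}"
definition bet :: "nat \<Rightarrow> nat list \<Rightarrow> nat list \<Rightarrow> nat \<Rightarrow> nat \<Rightarrow> nat" where
  "bet n pl El s j = (n * pl!s + j * El!s) div (3*n)"
definition tst :: "nat \<Rightarrow> nat \<Rightarrow> (nat \<Rightarrow> nat \<times> nat) \<Rightarrow> bool" where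
  "tst c \<beta> \<rho> = (\<not>(Aval (\<rho> (\<beta> div 6)) (\<beta> mod 6) = c \<and> Aval (\<rho> (Suc \<beta> div 6)) (Suc \<beta> mod 6) = c))"
definition CertSet :: "nat \<Rightarrow> nat \<Rightarrow> nat \<Rightarrow> (nat \<times> nat list \<times> nat list) set" where
  "CertSet Q V W = {(c, pl, El). c < 3 \<and> length pl = Suc W \<and> length El = Suc W \<and> pl!0 \<le> 3*Q \<and> El!W \<le> V \<and>
     (\<forall>t<W. El!t \<le> El!(Suc t) \<and> pl!t + El!t \<le> pl!(Suc t) \<and> pl!(Suc t) \<le> pl!t + El!(Suc t) + 1)}"

lemma wave_wv:
  assumes b: "0 < b" and n: "0 < n"
  and mw: "mono_wave col Q L w" and fst: "6 * b < w 1 - w 0"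
  shows "wv b n L w"
proof
  show "0 < b" "0 < n" by fact+
  have aw: "ascending_wave L w" and rng: "\<forall>i<L. w i \<in> {1..Q}" using mw by (auto simp: mono_wave_def)
  show "\<And>i. i + 1 < L \<Longrightarrow> w i < w (i + 1)" using aw by (auto simp: ascending_wave_def)
  show "\<And>i. i + 2 < L \<Longrightarrow> w (i + 1) - w i \<le> w (i + 2) - w (i + 1)" using aw by (auto simp: ascending_wave_def)
  show "\<And>i. i < L \<Longrightarrow> 1 \<le> w i" using rng by auto
  show "6 * b < w 1 - w 0" by fact
qed

lemma disj_blocks: "\<beta> + 11 \<le> \<beta>' \<Longrightarrow> {\<beta> div 6, Suc \<beta> div 6} \<inter> {\<beta>' div 6, Suc \<beta>' div 6} = {}"
proof -
  assume h: "\<beta> + 11 \<le> \<beta>'"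
  have "(Suc \<beta> + 6) div 6 \<le> \<beta>' div 6" using h by (intro div_le_mono) simp
  then have a: "Suc \<beta> div 6 < \<beta>' div 6" by simp
  have b1: "\<beta> div 6 \<le> Suc \<beta> div 6" and b2: "\<beta>' div 6 \<le> Suc \<beta>' div 6" by (simp_all add: div_le_mono)
  have A: "{\<beta> div 6, Suc \<beta> div 6} \<subseteq> {..<\<beta>' div 6}" using a b1 by auto
  have B: "{\<beta>' div 6, Suc \<beta>' div 6} \<subseteq> {\<beta>' div 6..}" using b2 by auto
  have "{..<\<beta>' div 6} \<inter> {\<beta>' div 6..} = {}" by auto
  then show ?thesis using A B by blast
qed

lemma ee_le_V:
  assumes wvv: "wv b n L w" and L2: "2 \<le> L" and i: "i + 2 \<le> L"
  and lst: "4 * 10^14 * (w (L-1) - w (L-2)) < k * b"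
  shows "ee b n w i \<le> 3 * n * k div (4 * 10^14)"
proof -
  interpret wv b n L w by fact
  have "ee b n w i \<le> ee b n w (L - 2)" using i L2 by (intro e_mono) auto
  moreover have "ee b n w (L - 2) \<le> 3 * n * k div (4 * 10^14)"
  proof -
    define D where "D = dd w (L - 2)"
    have D: "D = w (L-1) - w (L-2)" using L2 by (simp add: D_def dd_def Suc_diff_Suc numeral_2_eq_2)
    define e where "e = ee b n w (L - 2)"
    have eb: "b * e \<le> 3 * n * D" unfolding e_def D_def by (rule e_bounds(1))
    have "(e * (4 * 10^14)) * b = (b * e) * (4 * 10^14)" by (simp add: algebra_simps)
    also have "\<dots> \<le> (3 * n * D) * (4 * 10^14)" using eb by (rule mult_right_mono) simp
    also have "\<dots> = 3 * n * (4 * 10^14 * D)" by (simp add: algebra_simps)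
    also have "\<dots> < 3 * n * (k * b)"
    proof -
      have "4 * 10^14 * D < k * b" using lst D by simp
      then show ?thesis using n_pos by (intro mult_strict_left_mono) auto
    qed
    also have "\<dots> = (3 * n * k) * b" by (simp add: algebra_simps)
    finally have "e * (4 * 10^14) < 3 * n * k" using mult_less_cancel2 by blast
    then have "e * (4 * 10^14) \<le> 3 * n * k" by simp
    then show ?thesis unfolding e_def by (simp add: less_eq_div_iff_mult_less_eq)
  qed
  ultimately show ?thesis by simp
qed

lemma cert_props:
  fixes \<gamma> :: "nat \<Rightarrow> nat \<Rightarrow> nat" and \<rho> :: "nat \<Rightarrow> nat \<times> nat"
  assumes b: "0 < b" and n: "0 < n" "even n" and L2: "2 \<le> L"
  and Wd: "W = (L - 2) div n" and Vd: "V = 3 * n * k div (4 * 10^14)"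
  and hyp: "\<forall>i<3. \<forall>x\<in>{1..b}. \<gamma> i x \<in> {0,1,2} - {i}"
  and mw: "mono_wave (block_coloring b \<gamma> \<rho>) Q L w" and fst: "6 * b < w 1 - w 0"
  and lst: "4 * 10^14 * (w (L-1) - w (L-2)) < k * b"
  and pl: "pl = map (pp b n w) [0..<Suc W]" and El: "El = map (EE b n w) [0..<Suc W]"
  shows cert_in: "(block_coloring b \<gamma> \<rho> (w 0), pl, El) \<in> CertSet Q V W"
    and cert_tst: "\<And>s j. (s,j) \<in> Jz n W El \<Longrightarrow> tst (block_coloring b \<gamma> \<rho> (w 0)) (bet n pl El s j) \<rho>"
    and cert_rng: "\<And>s j. (s,j) \<in> Jz n W El \<Longrightarrow> Suc (bet n pl El s j) div 6 < num_groups Q b"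
    and cert_disj: "\<And>x y. x \<in> Jz n W El \<Longrightarrow> y \<in> Jz n W El \<Longrightarrow> x \<noteq> y \<Longrightarrow>
        {bet n pl El (fst x) (snd x) div 6, Suc (bet n pl El (fst x) (snd x)) div 6}
        \<inter> {bet n pl El (fst y) (snd y) div 6, Suc (bet n pl El (fst y) (snd y)) div 6} = {}"
proof -
  have wvv: "wv b n L w" using wave_wv[OF b n(1) mw fst] .
  interpret wv b n L w by (rule wvv)
  have rng: "\<And>i. i < L \<Longrightarrow> w i \<in> {1..Q}" using mw unfolding mono_wave_def by blast
  have mono: "\<And>i. i < L \<Longrightarrow> block_coloring b \<gamma> \<rho> (w i) = block_coloring b \<gamma> \<rho> (w 0)"
    using mw unfolding mono_wave_def by blast
  have "W * n \<le> L - 2" unfolding Wd by (rule div_times_less_eq_dividend)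
  then have WnL: "W * n + 2 \<le> L" using L2 by linarith
  have plE: "pl ! s = pp b n w s" "El ! s = EE b n w s" if "s \<le> W" for s
    using that unfolding pl El by (simp_all add: nth_map_upt del: upt_Suc)
  have blk: "(w (s*n + j) - 1) div b = bet n pl El s j \<or> (w (s*n + j) - 1) div b = Suc (bet n pl El s j)"
    and iL: "s * n + j + 2 \<le> L"
    if sj: "(s,j) \<in> Jz n W El" for s j
  proof -
    have s: "s < W" and fl: "El!s = El!(Suc s)" and j: "j < n" using sj by (auto simp: Jz_def)
    have SL: "Suc s * n + 2 \<le> L"
    proof -
      have "Suc s * n \<le> W * n" using s by (intro mult_right_mono) auto
      then show ?thesis using WnL by simp
    qed
    have flat: "EE b n w s = EE b n w (Suc s)" using fl plE[of s] plE[of "Suc s"] s by simp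
    show "(w (s*n + j) - 1) div b = bet n pl El s j \<or> (w (s*n + j) - 1) div b = Suc (bet n pl El s j)"
      using block_pred[OF flat j SL] plE[of s] s unfolding bet_def by simp
    show "s * n + j + 2 \<le> L" using SL j by simp
  qed
  show "\<And>s j. (s,j) \<in> Jz n W El \<Longrightarrow> tst (block_coloring b \<gamma> \<rho> (w 0)) (bet n pl El s j) \<rho>"
  proof -
    fix s j assume sj: "(s,j) \<in> Jz n W El"
    define i where "i = s * n + j"
    have iL: "i < L" using iL[OF sj] i_def by simp
    have av: "Aval (\<rho> ((w i - 1) div b div 6)) ((w i - 1) div b mod 6) \<noteq> block_coloring b \<gamma> \<rho> (w 0)"
      using color_avoid(1)[OF b hyp, of \<rho> "w i"] mono[OF iL] by simp
    show "tst (block_coloring b \<gamma> \<rho> (w 0)) (bet n pl El s j) \<rho>"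
      using blk[OF sj] av unfolding tst_def i_def by auto
  qed
  have betle: "bet n pl El s j \<le> (w (s*n + j) - 1) div b" if "(s,j) \<in> Jz n W El" for s j
    using blk[OF that] by auto
  have betge: "(w (s*n + j) - 1) div b \<le> Suc (bet n pl El s j)" if "(s,j) \<in> Jz n W El" for s j
    using blk[OF that] by auto
  show "\<And>s j. (s,j) \<in> Jz n W El \<Longrightarrow> Suc (bet n pl El s j) div 6 < num_groups Q b"
  proof -
    fix s j assume sj: "(s,j) \<in> Jz n W El"
    define i where "i = s * n + j"
    have i1: "i + 1 < L" using iL[OF sj] i_def by simp
    have "Suc (bet n pl El s j) \<le> (w i - 1) div b + 1" using betle[OF sj] i_def by simp
    also have "\<dots> \<le> (w (i + 1) - 1) div b" by (rule block_next[OF i1])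
    also have "\<dots> \<le> (Q - 1) div b" using rng[OF i1] by (intro div_le_mono) auto
    finally have "Suc (bet n pl El s j) div 6 \<le> (Q - 1) div b div 6" by (rule div_le_mono)
    also have "\<dots> = (Q - 1) div (6 * b)" by (simp add: div_mult2_eq mult.commute)
    also have "\<dots> < (Q - 1 + 6 * b) div (6 * b)" using b by simp
    also have "Q - 1 + 6 * b = Q + 6 * b - 1" using rng[OF i1] by simp
    finally show "Suc (bet n pl El s j) div 6 < num_groups Q b" by (simp add: num_groups_def)
  qed
  show "\<And>x y. x \<in> Jz n W El \<Longrightarrow> y \<in> Jz n W El \<Longrightarrow> x \<noteq> y \<Longrightarrow>
        {bet n pl El (fst x) (snd x) div 6, Suc (bet n pl El (fst x) (snd x)) div 6}
        \<inter> {bet n pl El (fst y) (snd y) div 6, Suc (bet n pl El (fst y) (snd y)) div 6} = {}"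
  proof -
    have key: "bet n pl El s j + 11 \<le> bet n pl El s' j'"
      if sj: "(s,j) \<in> Jz n W El" and sj': "(s',j') \<in> Jz n W El" and lt: "s * n + j < s' * n + j'" for s j s' j'
    proof -
      have ev: "even (s * n + j)" "even (s' * n + j')" using sj sj' n(2) by (auto simp: Jz_def)
      have "s * n + j + 2 \<le> s' * n + j'" using ev lt by presburger
      then have "(w (s*n+j) - 1) div b + 12 \<le> (w (s'*n+j') - 1) div b"
        using iL[OF sj'] by (intro block_sep) auto
      then show ?thesis using betle[OF sj] betge[OF sj'] by simp
    qed
    fix x y assume x: "x \<in> Jz n W El" and y: "y \<in> Jz n W El" and xy: "x \<noteq> y"
    obtain s j s' j' where xs: "x = (s,j)" and ys: "y = (s',j')" by (cases x, cases y) auto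
    have j: "j < n" "j' < n" using x y xs ys by (auto simp: Jz_def)
    have ne: "s * n + j \<noteq> s' * n + j'"
    proof
      assume eq: "s * n + j = s' * n + j'"
      have "(s * n + j) div n = s" "(s' * n + j') div n = s'" using j n(1) by simp_all
      then have "s = s'" using eq by simp
      then have "j = j'" using eq by simp
      then show False using xy xs ys \<open>s = s'\<close> by simp
    qed
    show "{bet n pl El (fst x) (snd x) div 6, Suc (bet n pl El (fst x) (snd x)) div 6}
        \<inter> {bet n pl El (fst y) (snd y) div 6, Suc (bet n pl El (fst y) (snd y)) div 6} = {}"
    proof (cases "s * n + j < s' * n + j'")
      case True
      then show ?thesis using key[of s j s' j'] x y xs ys disj_blocks by simp
    next
      case False
      then have "s' * n + j' < s * n + j" using ne by simp
      then show ?thesis using key[of s' j' s j] x y xs ys disj_blocks by (simp add: Int_commute)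
    qed
  qed
  show "(block_coloring b \<gamma> \<rho> (w 0), pl, El) \<in> CertSet Q V W"
  proof -
    have c3: "block_coloring b \<gamma> \<rho> (w 0) < 3" by (rule color_avoid(2)[OF b hyp])
    have L0: "0 < L" using L2 by simp
    have p0: "pl ! 0 \<le> 3 * Q"
    proof -
      have "pl ! 0 = 3 * (w 0 - 1) div b" using plE[of 0] by (simp add: pp_def)
      also have "\<dots> \<le> 3 * (w 0 - 1)" by simp
      also have "\<dots> \<le> 3 * Q" using rng[OF L0] by (simp del: One_nat_def; linarith)
      finally show ?thesis .
    qed
    have EW: "El ! W \<le> V"
      using plE[of W] ee_le_V[OF wvv L2 _ lst, of "W * n"] WnL Vd by (simp add: EE_def)
    have steps: "El!t \<le> El!(Suc t) \<and> pl!t + El!t \<le> pl!(Suc t) \<and> pl!(Suc t) \<le> pl!t + El!(Suc t) + 1"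
      if t: "t < W" for t
    proof -
      have SL: "Suc t * n + 2 \<le> L"
      proof -
        have "Suc t * n \<le> W * n" using t by (intro mult_right_mono) auto
        then show ?thesis using WnL by simp
      qed
      have "EE b n w t \<le> EE b n w (Suc t)" using SL by (intro E_mono) auto
      then show ?thesis using anchor[OF SL] plE[of t] plE[of "Suc t"] t by simp
    qed
    have lens: "length pl = Suc W" "length El = Suc W" unfolding pl El by simp_all
    show ?thesis unfolding CertSet_def using c3 p0 EW steps lens by blast
  qed
qed

lemma tele:
  fixes f :: "nat \<Rightarrow> nat"
  assumes "\<forall>t<W. f t \<le> f (Suc t)"
  shows "(\<Sum>t<W. f (Suc t) - f t) = f W - f 0 \<and> f 0 \<le> f W"
  using assms
proof (induction W)
  case 0 then show ?case by simp
next
  case (Suc W)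
  then have IH: "(\<Sum>t<W. f (Suc t) - f t) = f W - f 0" "f 0 \<le> f W" by auto
  have "f W \<le> f (Suc W)" using Suc.prems by simp
  then show ?case using IH by simp
qed

lemma sum_list_upt: "sum_list (map f [0..<W]) = (\<Sum>t<W. f t)"
  by (simp add: interv_sum_list_conv_sum_set_nat atLeast0LessThan)

definition LS :: "nat \<Rightarrow> nat \<Rightarrow> nat list set" where "LS W S = {xs. length xs = W \<and> sum_list xs \<le> S}"

definition enc :: "nat \<Rightarrow> nat \<times> nat list \<times> nat list \<Rightarrow> nat \<times> nat \<times> nat \<times> nat list \<times> nat list" where
  "enc W z = (case z of (c, pl, El) \<Rightarrow> (c, pl!0, El!0, map (\<lambda>t. El!(Suc t) - El!t) [0..<W],
                map (\<lambda>t. pl!(Suc t) - pl!t - El!t) [0..<W]))"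

lemma enc_in:
  assumes z: "z \<in> CertSet Q V W"
  shows "enc W z \<in> {..<3} \<times> {..3*Q} \<times> {..V} \<times> LS W V \<times> LS W (V + W)"
proof -
  obtain c pl El where zz: "z = (c, pl, El)" by (cases z) auto
  have c: "c < 3" and p0: "pl!0 \<le> 3*Q" and EW: "El!W \<le> V"
    and st: "\<forall>t<W. El!t \<le> El!(Suc t) \<and> pl!t + El!t \<le> pl!(Suc t) \<and> pl!(Suc t) \<le> pl!t + El!(Suc t) + 1"
    using z zz by (auto simp: CertSet_def)
  have mono: "\<forall>t<W. El!t \<le> El!(Suc t)" using st by blast
  have tl: "(\<Sum>t<W. El!(Suc t) - El!t) = El!W - El!0" "El!0 \<le> El!W"
    using tele[of W "\<lambda>t. El!t", OF mono] by auto
  have s1: "sum_list (map (\<lambda>t. El!(Suc t) - El!t) [0..<W]) \<le> V"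
    using tl EW by (simp add: sum_list_upt)
  have "sum_list (map (\<lambda>t. pl!(Suc t) - pl!t - El!t) [0..<W]) = (\<Sum>t<W. pl!(Suc t) - pl!t - El!t)"
    by (simp add: sum_list_upt)
  also have "\<dots> \<le> (\<Sum>t<W. (El!(Suc t) - El!t) + 1)"
    by (intro sum_mono) (use st in force)
  also have "\<dots> = (\<Sum>t<W. El!(Suc t) - El!t) + W" by (simp only: sum.distrib) simp
  also have "\<dots> = (El!W - El!0) + W" using tl by simp
  also have "\<dots> \<le> V + W" using EW by simp
  finally have s2: "sum_list (map (\<lambda>t. pl!(Suc t) - pl!t - El!t) [0..<W]) \<le> V + W" .
  show ?thesis unfolding zz enc_def LS_def using c p0 tl EW s1 s2 by auto
qed

lemma enc_inj: "inj_on (enc W) (CertSet Q V W)"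
proof (rule inj_onI)
  fix z z' assume z: "z \<in> CertSet Q V W" and z': "z' \<in> CertSet Q V W" and eq: "enc W z = enc W z'"
  obtain c pl El where zz: "z = (c, pl, El)" by (cases z) auto
  obtain c' pl' El' where zz': "z' = (c', pl', El')" by (cases z') auto
  have len: "length pl = Suc W" "length El = Suc W" "length pl' = Suc W" "length El' = Suc W"
    using z z' zz zz' by (auto simp: CertSet_def)
  have st: "\<forall>t<W. El!t \<le> El!(Suc t) \<and> pl!t + El!t \<le> pl!(Suc t)"
    and st': "\<forall>t<W. El'!t \<le> El'!(Suc t) \<and> pl'!t + El'!t \<le> pl'!(Suc t)"
    using z z' zz zz' by (auto simp: CertSet_def)
  have e0: "c = c'" "pl!0 = pl'!0" "El!0 = El'!0"
    and d: "map (\<lambda>t. El!(Suc t) - El!t) [0..<W] = map (\<lambda>t. El'!(Suc t) - El'!t) [0..<W]"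
    and a: "map (\<lambda>t. pl!(Suc t) - pl!t - El!t) [0..<W] = map (\<lambda>t. pl'!(Suc t) - pl'!t - El'!t) [0..<W]"
    using eq zz zz' by (auto simp: enc_def)
  have dt: "El!(Suc t) - El!t = El'!(Suc t) - El'!t" if "t < W" for t
    using arg_cong[OF d, of "\<lambda>xs. xs ! t"] that by simp
  have at: "pl!(Suc t) - pl!t - El!t = pl'!(Suc t) - pl'!t - El'!t" if "t < W" for t
    using arg_cong[OF a, of "\<lambda>xs. xs ! t"] that by simp
  have EE: "El!t = El'!t" if "t \<le> W" for t
    using that
  proof (induction t)
    case 0 then show ?case using e0 by simp
  next
    case (Suc t)
    then have "El!t = El'!t" "t < W" by auto
    then show ?case using dt[of t] st st' by force
  qed
  have PP: "pl!t = pl'!t" if "t \<le> W" for t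
    using that
  proof (induction t)
    case 0 then show ?case using e0 by simp
  next
    case (Suc t)
    then have "pl!t = pl'!t" "t < W" by auto
    then show ?case using at[of t] st st' EE[of t] by force
  qed
  have "El = El'" by (rule nth_equalityI) (use len EE in auto)
  moreover have "pl = pl'" by (rule nth_equalityI) (use len PP in auto)
  ultimately show "z = z'" using zz zz' e0 by simp
qed

lemma card_CertSet:
  "finite (CertSet Q V W) \<and> card (CertSet Q V W) \<le> 3 * (3 * Q + 1) * (V + 1) * 2 ^ (W + V) * 2 ^ (W + (V + W))"
proof -
  define T where "T = {..<3::nat} \<times> {..3*Q} \<times> {..V} \<times> LS W V \<times> LS W (V + W)"
  have finT: "finite T" unfolding T_def LS_def using lists_sum_finite by auto
  have sub: "enc W ` CertSet Q V W \<subseteq> T" using enc_in unfolding T_def by blast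
  have fin: "finite (CertSet Q V W)"
    using finite_imageD[OF finite_subset[OF sub finT] enc_inj] .
  have "card (CertSet Q V W) = card (enc W ` CertSet Q V W)" using card_image[OF enc_inj] by simp
  also have "\<dots> \<le> card T" using card_mono[OF finT sub] .
  also have "\<dots> = 3 * (3 * Q + 1) * (V + 1) * (card (LS W V) * card (LS W (V + W)))"
    unfolding T_def by (simp add: card_cartesian_product algebra_simps)
  also have "\<dots> \<le> 3 * (3 * Q + 1) * (V + 1) * (2 ^ (W + V) * 2 ^ (W + (V + W)))"
    using card_lists_sum[of W V] card_lists_sum[of W "V + W"] unfolding LS_def
    by (intro mult_le_mono2 mult_le_mono) auto
  finally show ?thesis using fin by (simp add: mult.assoc)
qed

lemma card_even: "even n \<Longrightarrow> card {j::nat. j < n \<and> even j} = n div 2"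
proof -
  assume n: "even n"
  have "{j::nat. j < n \<and> even j} = (\<lambda>t. 2 * t) ` {..<n div 2}"
  proof (rule set_eqI, rule iffI)
    fix j assume "j \<in> {j::nat. j < n \<and> even j}"
    then have "j < n" "even j" by auto
    then have "j = 2 * (j div 2)" "j div 2 < n div 2" using n by auto
    then show "j \<in> (\<lambda>t. 2 * t) ` {..<n div 2}" by blast
  next
    fix j assume "j \<in> (\<lambda>t. 2 * t) ` {..<n div 2}"
    then obtain t where "j = 2 * t" "t < n div 2" by auto
    then show "j \<in> {j::nat. j < n \<and> even j}" using n by auto
  qed
  moreover have "inj_on (\<lambda>t::nat. 2 * t) {..<n div 2}" by (auto simp: inj_on_def)
  ultimately show ?thesis by (simp add: card_image)
qed

lemma card_Jz:
  assumes z: "(c, pl, El) \<in> CertSet Q V W" and n: "even n"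
  shows "finite (Jz n W El) \<and> (n div 2) * (W - V) \<le> card (Jz n W El)"
proof -
  have EW: "El!W \<le> V" and mono: "\<forall>t<W. El!t \<le> El!(Suc t)" using z by (auto simp: CertSet_def)
  have tl: "(\<Sum>t<W. El!(Suc t) - El!t) = El!W - El!0" using tele[of W "\<lambda>t. El!t", OF mono] by auto
  define F where "F = {s. s < W \<and> El!s = El!(Suc s)}"
  define N where "N = {s. s < W \<and> El!s \<noteq> El!(Suc s)}"
  have "card N = (\<Sum>t\<in>N. 1)" by simp
  also have "\<dots> \<le> (\<Sum>t\<in>N. El!(Suc t) - El!t)"
    by (intro sum_mono) (use mono in \<open>auto simp: N_def\<close>)
  also have "\<dots> \<le> (\<Sum>t<W. El!(Suc t) - El!t)"
    by (intro sum_mono2) (auto simp: N_def)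
  finally have cN: "card N \<le> V" using tl EW by simp
  have "F \<union> N = {..<W}" "F \<inter> N = {}" by (auto simp: F_def N_def)
  then have "card F + card N = W"
    by (metis card_Un_disjoint card_lessThan finite_Un finite_lessThan)
  then have cF: "W - V \<le> card F" using cN by simp
  have J: "Jz n W El = F \<times> {j. j < n \<and> even j}" by (auto simp: Jz_def F_def)
  have finF: "finite F" by (simp add: F_def)
  have "card (Jz n W El) = card F * (n div 2)" using J card_even[OF n] by (simp add: card_cartesian_product)
  moreover have "finite (Jz n W El)" using J finF by simp
  ultimately show ?thesis using cF by (simp add: mult.commute)
qed

lemma real_cond:
  "real (D::nat) < real k * real b / (4 * 10 ^ 14) \<longleftrightarrow> 4 * 10^14 * D < k * b"
proof -
  have "real D < real k * real b / (4 * 10 ^ 14) \<longleftrightarrow> real D * (4 * 10^14) < real k * real b"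
    by (simp add: pos_less_divide_eq)
  also have "\<dots> \<longleftrightarrow> real (4 * 10^14 * D) < real (k * b)" by (simp add: mult.commute)
  also have "\<dots> \<longleftrightarrow> 4 * 10^14 * D < k * b" by (rule of_nat_less_iff)
  finally show ?thesis .
qed

lemma main_bound:
  fixes \<gamma> :: "nat \<Rightarrow> nat \<Rightarrow> nat"
  assumes b: "0 < b" and L2: "2 \<le> L"
  and hyp: "\<forall>i<3. \<forall>x\<in>{1..b}. \<gamma> i x \<in> {0,1,2} - {i}"
  and Wd: "W = (L - 2) div 100" and Vd: "V = 3 * 100 * k div (4 * 10^14)"
  shows "measure_pmf.prob (row_choices (num_groups Q b))
              {\<rho>. \<exists>w. mono_wave (block_coloring b \<gamma> \<rho>) Q L w
                      \<and> w 1 - w 0 > 6 * b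
                      \<and> real (w (L - 1) - w (L - 2)) < real k * real b / (4 * 10 ^ 14)}
         \<le> real (3 * (3 * Q + 1) * (V + 1) * 2 ^ (W + V) * 2 ^ (W + (V + W))) * (8/9) ^ (50 * (W - V))"
proof -
  define n :: nat where "n = 100"
  define G where "G = num_groups Q b"
  define \<Omega> where "\<Omega> = PiE {0..<G} (\<lambda>_. A_rows)"
  define Ev where "Ev = {\<rho>. \<exists>w. mono_wave (block_coloring b \<gamma> \<rho>) Q L w
                      \<and> w 1 - w 0 > 6 * b
                      \<and> real (w (L - 1) - w (L - 2)) < real k * real b / (4 * 10 ^ 14)}"
  define Good where "Good = (\<lambda>\<rho> w. mono_wave (block_coloring b \<gamma> \<rho>) Q L w \<and> 6 * b < w 1 - w 0
                      \<and> 4 * 10^14 * (w (L-1) - w (L-2)) < k * b)"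
  define cert where "cert = (\<lambda>\<rho> w. (block_coloring b \<gamma> \<rho> (w 0), map (pp b n w) [0..<Suc W], map (EE b n w) [0..<Suc W]))"
  define Cert where "Cert = {cert \<rho> w | \<rho> w. \<rho> \<in> \<Omega> \<and> Good \<rho> w}"
  define X :: real where "X = (8/9) ^ (50 * (W - V))"
  define Tz where "Tz = (\<lambda>(z::nat \<times> nat list \<times> nat list) \<rho>. \<forall>x\<in>Jz n W (snd (snd z)).
        tst (fst z) (bet n (fst (snd z)) (snd (snd z)) (fst x) (snd x)) \<rho>)"
  have n: "0 < n" "even n" by (simp_all add: n_def)
  have Vd': "V = 3 * n * k div (4 * 10^14)" using Vd n_def by simp
  have Wd': "W = (L - 2) div n" using Wd n_def by simp
  have finO: "finite \<Omega>" unfolding \<Omega>_def by (simp add: finite_PiE finite_A_rows)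
  have neO: "\<Omega> \<noteq> {}" unfolding \<Omega>_def by (simp add: A_rows_def PiE_eq_empty_iff)
  have cardO: "0 < card \<Omega>" using finO neO by (simp add: card_gt_0_iff)
  have EvG: "\<rho> \<in> Ev \<longleftrightarrow> (\<exists>w. Good \<rho> w)" for \<rho>
    unfolding Ev_def Good_def mem_Collect_eq real_cond by (rule refl)
  have cert_good: "cert \<rho> w \<in> CertSet Q V W" and
       cert_t: "Tz (cert \<rho> w) \<rho>" and
       cert_r: "\<And>s j. (s,j) \<in> Jz n W (snd (snd (cert \<rho> w))) \<Longrightarrow> Suc (bet n (fst (snd (cert \<rho> w))) (snd (snd (cert \<rho> w))) s j) div 6 < G" and
       cert_d: "\<And>x y. x \<in> Jz n W (snd (snd (cert \<rho> w))) \<Longrightarrow> y \<in> Jz n W (snd (snd (cert \<rho> w))) \<Longrightarrow> x \<noteq> y \<Longrightarrow>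
        {bet n (fst (snd (cert \<rho> w))) (snd (snd (cert \<rho> w))) (fst x) (snd x) div 6, Suc (bet n (fst (snd (cert \<rho> w))) (snd (snd (cert \<rho> w))) (fst x) (snd x)) div 6}
        \<inter> {bet n (fst (snd (cert \<rho> w))) (snd (snd (cert \<rho> w))) (fst y) (snd y) div 6, Suc (bet n (fst (snd (cert \<rho> w))) (snd (snd (cert \<rho> w))) (fst y) (snd y)) div 6} = {}"
    if g: "Good \<rho> w" for \<rho> w
  proof -
    have mw: "mono_wave (block_coloring b \<gamma> \<rho>) Q L w" and f: "6 * b < w 1 - w 0"
      and l: "4 * 10^14 * (w (L-1) - w (L-2)) < k * b" using g by (auto simp: Good_def)
    note cp = cert_props[OF b n L2 Wd' Vd' hyp mw f l refl refl]
    show "cert \<rho> w \<in> CertSet Q V W" unfolding cert_def using cp(1) .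
    show "Tz (cert \<rho> w) \<rho>" unfolding Tz_def cert_def using cp(2) by auto
    show "\<And>s j. (s,j) \<in> Jz n W (snd (snd (cert \<rho> w))) \<Longrightarrow> Suc (bet n (fst (snd (cert \<rho> w))) (snd (snd (cert \<rho> w))) s j) div 6 < G"
      unfolding cert_def G_def using cp(3) by simp
    show "\<And>x y. x \<in> Jz n W (snd (snd (cert \<rho> w))) \<Longrightarrow> y \<in> Jz n W (snd (snd (cert \<rho> w))) \<Longrightarrow> x \<noteq> y \<Longrightarrow>
        {bet n (fst (snd (cert \<rho> w))) (snd (snd (cert \<rho> w))) (fst x) (snd x) div 6, Suc (bet n (fst (snd (cert \<rho> w))) (snd (snd (cert \<rho> w))) (fst x) (snd x)) div 6}
        \<inter> {bet n (fst (snd (cert \<rho> w))) (snd (snd (cert \<rho> w))) (fst y) (snd y) div 6, Suc (bet n (fst (snd (cert \<rho> w))) (snd (snd (cert \<rho> w))) (fst y) (snd y)) div 6} = {}"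
      unfolding cert_def using cp(4) by simp
  qed
  have CertSub: "Cert \<subseteq> CertSet Q V W" unfolding Cert_def using cert_good by blast
  have finCS: "finite (CertSet Q V W)" and cardCS: "card (CertSet Q V W) \<le> 3 * (3 * Q + 1) * (V + 1) * 2 ^ (W + V) * 2 ^ (W + (V + W))"
    using card_CertSet by auto
  have finC: "finite Cert" using finite_subset[OF CertSub finCS] .
  have cover: "\<Omega> \<inter> Ev \<subseteq> (\<Union>z\<in>Cert. {\<rho>\<in>\<Omega>. Tz z \<rho>})"
  proof
    fix \<rho> assume "\<rho> \<in> \<Omega> \<inter> Ev"
    then obtain w where r: "\<rho> \<in> \<Omega>" and g: "Good \<rho> w" using EvG by blast
    have "cert \<rho> w \<in> Cert" unfolding Cert_def using r g by blast
    moreover have "Tz (cert \<rho> w) \<rho>" using cert_t[OF g] .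
    ultimately show "\<rho> \<in> (\<Union>z\<in>Cert. {\<rho>\<in>\<Omega>. Tz z \<rho>})" using r by blast
  qed
  have each: "real (card {\<rho>\<in>\<Omega>. Tz z \<rho>}) \<le> X * real (card \<Omega>)" if z: "z \<in> Cert" for z
  proof -
    obtain \<rho>0 w where zc: "z = cert \<rho>0 w" and g: "Good \<rho>0 w" using z unfolding Cert_def by blast
    obtain c pl El where zz: "z = (c, pl, El)" by (cases z) auto
    have zin: "(c, pl, El) \<in> CertSet Q V W" using cert_good[OF g] zc zz by simp
    have c3: "c < 3" using zin by (simp add: CertSet_def)
    have cJ: "finite (Jz n W El) \<and> (n div 2) * (W - V) \<le> card (Jz n W El)" by (rule card_Jz[OF zin n(2)])
    define J where "J = Jz n W El"
    define bt where "bt = (\<lambda>x::nat\<times>nat. bet n pl El (fst x) (snd x))"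
    have ce: "cert \<rho>0 w = (c, pl, El)" using zc zz by simp
    have cr: "\<And>s j. (s,j) \<in> J \<Longrightarrow> Suc (bet n pl El s j) div 6 < G"
      using cert_r[OF g] unfolding ce J_def by simp
    have cd: "\<And>x y. x \<in> J \<Longrightarrow> y \<in> J \<Longrightarrow> x \<noteq> y \<Longrightarrow>
        {bet n pl El (fst x) (snd x) div 6, Suc (bet n pl El (fst x) (snd x)) div 6}
        \<inter> {bet n pl El (fst y) (snd y) div 6, Suc (bet n pl El (fst y) (snd y)) div 6} = {}"
      using cert_d[OF g] unfolding ce J_def by simp
    have rngJ: "Suc (bt x) div 6 < G" if "x \<in> J" for x
      using cr[of "fst x" "snd x"] that unfolding bt_def by simp
    have disJ: "{bt x div 6, Suc (bt x) div 6} \<inter> {bt y div 6, Suc (bt y) div 6} = {}"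
      if "x \<in> J" "y \<in> J" "x \<noteq> y" for x y
      using cd[OF that] unfolding bt_def .
    have "real (card {\<rho>\<in>PiE {0..<G} (\<lambda>_. A_rows). \<forall>x\<in>J. tst c (bt x) \<rho>})
          \<le> (8/9) ^ card J * real (card (PiE {0..<G} (\<lambda>_. A_rows)))"
    proof (rule card_tests[where H = "\<lambda>x. {bt x div 6, Suc (bt x) div 6}"])
      show "finite {0..<G}" by simp
      show "finite A_rows" by (rule finite_A_rows)
      show "finite J" using cJ J_def by simp
      show "\<And>x. x \<in> J \<Longrightarrow> {bt x div 6, Suc (bt x) div 6} \<subseteq> {0..<G}"
      proof -
        fix x assume "x \<in> J"
        then have "Suc (bt x) div 6 < G" by (rule rngJ)
        moreover have "bt x div 6 \<le> Suc (bt x) div 6" by (simp add: div_le_mono)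
        ultimately show "{bt x div 6, Suc (bt x) div 6} \<subseteq> {0..<G}" by auto
      qed
      show "\<And>x y. x \<in> J \<Longrightarrow> y \<in> J \<Longrightarrow> x \<noteq> y \<Longrightarrow> {bt x div 6, Suc (bt x) div 6} \<inter> {bt y div 6, Suc (bt y) div 6} = {}"
        by (rule disJ)
      show "\<And>x \<rho> \<rho>'. x \<in> J \<Longrightarrow> \<forall>y\<in>{bt x div 6, Suc (bt x) div 6}. \<rho> y = \<rho>' y \<Longrightarrow> tst c (bt x) \<rho> = tst c (bt x) \<rho>'"
        by (simp add: tst_def)
      show "\<And>x. x \<in> J \<Longrightarrow> real (card {\<rho> \<in> {0..<G} \<rightarrow>\<^sub>E A_rows. tst c (bt x) \<rho>}) \<le> 8 / 9 * real (card ({0..<G} \<rightarrow>\<^sub>E A_rows))"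
      proof -
        fix x assume x: "x \<in> J"
        have g2: "Suc (bt x) div 6 < G" by (rule rngJ[OF x])
        have g1: "bt x div 6 < G" using g2 by (meson div_le_mono le_less_trans le_SucI order_refl)
        show "real (card {\<rho> \<in> {0..<G} \<rightarrow>\<^sub>E A_rows. tst c (bt x) \<rho>}) \<le> 8 / 9 * real (card ({0..<G} \<rightarrow>\<^sub>E A_rows))"
          unfolding tst_def by (rule test_bound[OF g1 g2 c3])
      qed
      show "(0::real) \<le> 8/9" by simp
    qed
    also have "(8/9::real) ^ card J \<le> X"
    proof -
      have "50 * (W - V) \<le> card J" using cJ J_def n_def by simp
      then show ?thesis unfolding X_def by (rule power_decreasing) auto
    qed
    then have "(8/9::real) ^ card J * real (card (PiE {0..<G} (\<lambda>_. A_rows))) \<le> X * real (card (PiE {0..<G} (\<lambda>_. A_rows)))"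
      by (rule mult_right_mono) simp
    finally have "real (card {\<rho>\<in>PiE {0..<G} (\<lambda>_. A_rows). \<forall>x\<in>J. tst c (bt x) \<rho>}) \<le> X * real (card \<Omega>)"
      unfolding \<Omega>_def .
    moreover have "{\<rho>\<in>\<Omega>. Tz z \<rho>} = {\<rho>\<in>PiE {0..<G} (\<lambda>_. A_rows). \<forall>x\<in>J. tst c (bt x) \<rho>}"
      unfolding Tz_def zz J_def bt_def \<Omega>_def by auto
    ultimately show ?thesis by simp
  qed
  have "real (card (\<Omega> \<inter> Ev)) \<le> real (card (\<Union>z\<in>Cert. {\<rho>\<in>\<Omega>. Tz z \<rho>}))"
  proof -
    have "finite (\<Union>z\<in>Cert. {\<rho>\<in>\<Omega>. Tz z \<rho>})" using finO by (intro finite_subset[OF _ finO]) auto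
    then show ?thesis using card_mono[OF _ cover] by simp
  qed
  also have "\<dots> \<le> real (\<Sum>z\<in>Cert. card {\<rho>\<in>\<Omega>. Tz z \<rho>})"
    using card_UN_le[OF finC] of_nat_le_iff by blast
  also have "\<dots> = (\<Sum>z\<in>Cert. real (card {\<rho>\<in>\<Omega>. Tz z \<rho>}))" by simp
  also have "\<dots> \<le> (\<Sum>z\<in>Cert. X * real (card \<Omega>))" by (intro sum_mono each)
  also have "\<dots> = real (card Cert) * (X * real (card \<Omega>))" by simp
  also have "\<dots> \<le> real (card (CertSet Q V W)) * (X * real (card \<Omega>))"
    using card_mono[OF finCS CertSub] by (intro mult_right_mono) (auto simp: X_def)
  finally have main: "real (card (\<Omega> \<inter> Ev)) \<le> real (card (CertSet Q V W)) * X * real (card \<Omega>)"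
    by (simp add: mult.assoc)
  have "measure_pmf.prob (row_choices G) Ev = real (card (\<Omega> \<inter> Ev)) / real (card \<Omega>)"
    unfolding row_choices_def \<Omega>_def[symmetric] using finO neO by (simp add: measure_pmf_of_set)
  also have "\<dots> \<le> real (card (CertSet Q V W)) * X" using main cardO by (simp add: divide_le_eq)
  also have "\<dots> \<le> real (3 * (3 * Q + 1) * (V + 1) * 2 ^ (W + V) * 2 ^ (W + (V + W))) * X"
  proof (rule mult_right_mono)
    show "real (card (CertSet Q V W)) \<le> real (3 * (3 * Q + 1) * (V + 1) * 2 ^ (W + V) * 2 ^ (W + (V + W)))"
      using cardCS by (simp only: of_nat_le_iff)
    show "0 \<le> X" by (simp add: X_def)
  qed
  finally show ?thesis unfolding G_def Ev_def X_def .
qed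

lemma asym: "eventually (\<lambda>x::real. 6144 * x^6 / 2 powr (x/100) < 1/2) at_top"
proof -
  have "((\<lambda>x::real. 6144 * x^6 / 2 powr (x/100)) \<longlongrightarrow> 0) at_top" by real_asymp
  then show ?thesis by (rule order_tendstoD(2)) simp
qed

lemma numeric:
  fixes k :: nat
  assumes k: "1000 \<le> k"
  and Qd: "Q = k ^ 5 div (2 ^ 13 * 10 ^ 39)"
  and Wd: "W = (k div 4 - 2) div 100" and Vd: "V = 3 * 100 * k div (4 * 10^14)"
  shows "real (3 * (3 * Q + 1) * (V + 1) * 2 ^ (W + V) * 2 ^ (W + (V + W))) * (8/9) ^ (50 * (W - V))
         \<le> 6144 * real k ^ 6 / 2 powr (real k / 100)"
proof -
  have Wr: "real k / 400 - 2 \<le> real W"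
  proof -
    have a: "real k / 4 - 1 \<le> real (k div 4)"
    proof -
      have e: "4 * (k div 4) + k mod 4 = k" by (rule mult_div_mod_eq)
      have "k mod 4 < 4" by simp
      then have "k \<le> 4 * (k div 4) + 4" using e by linarith
      then have "real k \<le> real (4 * (k div 4) + 4)" by (simp only: of_nat_le_iff)
      then show ?thesis by simp
    qed
    have kd: "2 \<le> k div 4" using k by simp
    then have b: "real (k div 4 - 2) = real (k div 4) - 2" by simp
    have c: "real (k div 4 - 2) / 100 - 1 \<le> real W"
    proof -
      define m where "m = k div 4 - 2"
      have e: "100 * (m div 100) + m mod 100 = m" by (rule mult_div_mod_eq)
      have "m mod 100 < 100" by simp
      then have "m \<le> 100 * (m div 100) + 100" using e by linarith
      then have "real m \<le> real (100 * (m div 100) + 100)" by (simp only: of_nat_le_iff)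
      then show ?thesis unfolding Wd m_def[symmetric] by simp
    qed
    show ?thesis using a b c by linarith
  qed
  have Vr: "real V \<le> real k * 3 / (4 * 10^12)"
  proof -
    have "V * (4 * 10^14) \<le> 3 * 100 * k" unfolding Vd by (rule div_times_less_eq_dividend)
    then have "real (V * (4 * 10^14)) \<le> real (3 * 100 * k)" by (simp only: of_nat_le_iff)
    then show ?thesis by simp
  qed
  have VW: "10 * V \<le> W"
  proof -
    have "real (10 * V) \<le> real W" using Vr Wr k by simp
    then show ?thesis by (simp only: of_nat_le_iff)
  qed
  have Qk: "Q \<le> k ^ 5" unfolding Qd by simp
  define q where "q = 3 * (3 * Q + 1) * (V + 1)"
  have qk: "real q \<le> 24 * real k ^ 6"
  proof -
    have "1 \<le> k ^ 5" using k by simp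
    then have "3 * Q + 1 \<le> 4 * k ^ 5" using Qk by linarith
    moreover have "V + 1 \<le> 2 * k"
    proof -
      have "real V \<le> real k" using Vr by simp
      then show ?thesis using k by simp
    qed
    ultimately have "q \<le> 3 * (4 * k ^ 5) * (2 * k)" unfolding q_def by (intro mult_le_mono) auto
    also have "\<dots> = 24 * k ^ 6" by (simp add: power_Suc algebra_simps eval_nat_numeral)
    finally have "real q \<le> real (24 * k ^ 6)" by (simp only: of_nat_le_iff)
    then show ?thesis by simp
  qed
  have p50: "(8/9::real) ^ 50 \<le> 1/256" by (simp add: power_divide)
  have "real (q * 2 ^ (W + V) * 2 ^ (W + (V + W))) * (8/9) ^ (50 * (W - V))
      = real q * 2 ^ (3 * W + 2 * V) * ((8/9) ^ 50) ^ (W - V)"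
  proof -
    have ex: "W + V + (W + (V + W)) = 3*W + 2*V" by simp
    have e1: "(2::real)^(W+V) * 2^(W+(V+W)) = 2^(3*W+2*V)" by (simp only: power_add[symmetric] ex)
    have e2: "(8/9::real)^(50*(W-V)) = ((8/9)^50)^(W-V)" by (rule power_mult)
    have "real (q * 2 ^ (W + V) * 2 ^ (W + (V + W))) = real q * ((2::real)^(W+V) * 2^(W+(V+W)))" by simp
    then show ?thesis using e1 e2 by simp
  qed
  also have "\<dots> \<le> real q * 2 ^ (3 * W + 2 * V) * (1/256) ^ (W - V)"
    by (intro mult_left_mono power_mono p50) auto
  also have "\<dots> = real q * (2 ^ (3 * W + 2 * V) / 2 ^ (8 * (W - V)))"
    by (simp add: power_mult power_divide)
  also have "2 ^ (3 * W + 2 * V) / 2 ^ (8 * (W - V)) \<le> (1::real) / 2 ^ (4 * W)"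
  proof -
    have "3 * W + 2 * V + 4 * W \<le> 8 * (W - V)" using VW by simp
    then have "(2::real) ^ (3 * W + 2 * V + 4 * W) \<le> 2 ^ (8 * (W - V))" by (rule power_increasing) simp
    moreover have "(2::real) ^ (3 * W + 2 * V) * 2 ^ (4 * W) = 2 ^ (3 * W + 2 * V + 4 * W)" by (simp only: power_add)
    ultimately have "(2::real) ^ (3 * W + 2 * V) * 2 ^ (4 * W) \<le> 2 ^ (8 * (W - V))" by simp
    then show ?thesis by (simp add: field_simps)
  qed
  then have "real q * (2 ^ (3 * W + 2 * V) / 2 ^ (8 * (W - V))) \<le> real q * (1 / 2 ^ (4 * W))"
    by (intro mult_left_mono) auto
  also have "\<dots> \<le> 24 * real k ^ 6 / 2 ^ (4 * W)" using qk by (simp add: divide_right_mono)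
  also have "\<dots> \<le> 24 * real k ^ 6 / (2 powr (real k / 100) / 256)"
  proof (rule divide_left_mono)
    have "2 powr (real k / 100) / 256 = 2 powr (real k / 100 - 8)" by (simp add: powr_diff)
    also have "\<dots> \<le> 2 powr (real (4 * W))" using Wr by (intro powr_mono) auto
    also have "\<dots> = 2 ^ (4 * W)" by (rule powr_realpow) simp
    finally show "2 powr (real k / 100) / 256 \<le> 2 ^ (4 * W)" .
  qed auto
  also have "\<dots> = 6144 * real k ^ 6 / 2 powr (real k / 100)" by simp
  finally show ?thesis unfolding q_def by simp
qed

theorem lemma3p2:
  shows "\<forall>\<^sub>F k in sequentially.
    \<forall>\<gamma> :: nat \<Rightarrow> nat \<Rightarrow> nat.
      (let K = k div 80; b = AW K 2 - 1; Q = k ^ 5 div (2 ^ 13 * 10 ^ 39); L = k div 4 in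
        (\<forall>i<3. (\<forall>x\<in>{1..b}. \<gamma> i x \<in> {0,1,2} - {i}) \<and> \<not> (\<exists>w. mono_wave (\<gamma> i) b K w))
        \<longrightarrow> measure_pmf.prob (row_choices (num_groups Q b))
              {\<rho>. \<exists>w. mono_wave (block_coloring b \<gamma> \<rho>) Q L w
                      \<and> w 1 - w 0 > 6 * b
                      \<and> real (w (L - 1) - w (L - 2)) < real k * real b / (4 * 10 ^ 14)}
            < 1 / 2)"
proof -
  obtain N :: real where N: "\<And>x. N \<le> x \<Longrightarrow> 6144 * x^6 / 2 powr (x/100) < 1/2"
    using asym by (auto simp: eventually_at_top_linorder)
  have ev: "eventually (\<lambda>k::nat. 1000 \<le> k \<and> N \<le> real k) sequentially"
  proof (rule eventually_sequentiallyI[of "max 1000 (nat \<lceil>N\<rceil>)"])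
    fix k :: nat assume k: "max 1000 (nat \<lceil>N\<rceil>) \<le> k"
    then have "nat \<lceil>N\<rceil> \<le> k" by simp
    then have "N \<le> real k" by linarith
    then show "1000 \<le> k \<and> N \<le> real k" using k by simp
  qed
  show ?thesis
  proof (rule eventually_mono[OF ev])
    fix k :: nat assume k: "1000 \<le> k \<and> N \<le> real k"
    show "\<forall>\<gamma> :: nat \<Rightarrow> nat \<Rightarrow> nat.
      (let K = k div 80; b = AW K 2 - 1; Q = k ^ 5 div (2 ^ 13 * 10 ^ 39); L = k div 4 in
        (\<forall>i<3. (\<forall>x\<in>{1..b}. \<gamma> i x \<in> {0,1,2} - {i}) \<and> \<not> (\<exists>w. mono_wave (\<gamma> i) b K w))
        \<longrightarrow> measure_pmf.prob (row_choices (num_groups Q b))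
              {\<rho>. \<exists>w. mono_wave (block_coloring b \<gamma> \<rho>) Q L w
                      \<and> w 1 - w 0 > 6 * b
                      \<and> real (w (L - 1) - w (L - 2)) < real k * real b / (4 * 10 ^ 14)}
            < 1 / 2)"
    proof (intro allI)
      fix \<gamma> :: "nat \<Rightarrow> nat \<Rightarrow> nat"
      define b where "b = AW (k div 80) 2 - 1"
      define Q where "Q = k ^ 5 div (2 ^ 13 * 10 ^ 39)"
      define L where "L = k div 4"
      define W where "W = (L - 2) div 100"
      define V where "V = 3 * 100 * k div (4 * 10^14)"
      have goal: "measure_pmf.prob (row_choices (num_groups Q b))
              {\<rho>. \<exists>w. mono_wave (block_coloring b \<gamma> \<rho>) Q L w
                      \<and> w 1 - w 0 > 6 * b
                      \<and> real (w (L - 1) - w (L - 2)) < real k * real b / (4 * 10 ^ 14)} < 1 / 2"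
        if hyp0: "\<forall>i<3. (\<forall>x\<in>{1..b}. \<gamma> i x \<in> {0,1,2} - {i}) \<and> \<not> (\<exists>w. mono_wave (\<gamma> i) b (k div 80) w)"
      proof (cases "b = 0")
        case True
        have "{\<rho>. \<exists>w. mono_wave (block_coloring b \<gamma> \<rho>) Q L w
                      \<and> w 1 - w 0 > 6 * b
                      \<and> real (w (L - 1) - w (L - 2)) < real k * real b / (4 * 10 ^ 14)} = {}"
        proof -
          have z: "real k * real b / (4 * 10 ^ 14) = 0" using True by simp
          have "\<not> (real (D::nat) < 0)" for D by simp
          then show ?thesis unfolding z by blast
        qed
        then show ?thesis by (simp only:) simp
      next
        case False
        then have b: "0 < b" by simp
        have hyp: "\<forall>i<3. \<forall>x\<in>{1..b}. \<gamma> i x \<in> {0,1,2} - {i}" using hyp0 by blast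
        have "1000 \<le> k" using k by simp
        then have L2: "2 \<le> L" unfolding L_def by linarith
        have "measure_pmf.prob (row_choices (num_groups Q b))
              {\<rho>. \<exists>w. mono_wave (block_coloring b \<gamma> \<rho>) Q L w
                      \<and> w 1 - w 0 > 6 * b
                      \<and> real (w (L - 1) - w (L - 2)) < real k * real b / (4 * 10 ^ 14)}
            \<le> real (3 * (3 * Q + 1) * (V + 1) * 2 ^ (W + V) * 2 ^ (W + (V + W))) * (8/9) ^ (50 * (W - V))"
          by (rule main_bound[OF b L2 hyp W_def V_def])
        also have "\<dots> \<le> 6144 * real k ^ 6 / 2 powr (real k / 100)"
          by (rule numeric) (use k in \<open>simp_all add: Q_def W_def L_def V_def\<close>)
        also have "\<dots> < 1/2" using N k by blast
        finally show ?thesis .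
      qed
      show "let K = k div 80; b = AW K 2 - 1; Q = k ^ 5 div (2 ^ 13 * 10 ^ 39); L = k div 4 in
        (\<forall>i<3. (\<forall>x\<in>{1..b}. \<gamma> i x \<in> {0,1,2} - {i}) \<and> \<not> (\<exists>w. mono_wave (\<gamma> i) b K w))
        \<longrightarrow> measure_pmf.prob (row_choices (num_groups Q b))
              {\<rho>. \<exists>w. mono_wave (block_coloring b \<gamma> \<rho>) Q L w
                      \<and> w 1 - w 0 > 6 * b
                      \<and> real (w (L - 1) - w (L - 2)) < real k * real b / (4 * 10 ^ 14)}
            < 1 / 2"
        unfolding Let_def b_def[symmetric] Q_def[symmetric] L_def[symmetric] using goal by blast
    qed
  qed
qed

end
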